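(* Let $f:[0,1]\to\mathbb{R}$ be a $C^2$ function such that $f'(0)\ge 0$, $\inf_{[0,1]} f''>0$, $f'''$ exists and is bounded on $(0,1)$, and $f'f'''-(f'')^2\le 0$ on $(0,1)$. Then there exist a compact set $K\subseteq\mathbb{R}^2$ of two-dimensional Lebesgue measure $0$ and a constant $c>0$ such that for every $a\in[1,2]$, $K$ contains a translated copy of a piece of length at least $c$ of the graph of $x\mapsto af(x)$, i.e. there exist $(x_1,x_2)\in\mathbb{R}^2$ and an interval $I_a\subseteq[0,1]$ of length at least $c$ with $\{(x_1+t,\,x_2+af(t)):t\in I_a\}\subseteq K$. Moreover, there is a constant $C$ such that $|K(\delta)|\le C(\log\delta^{-1})^{-2}$ for all sufficiently small $\delta>0$. Consequently, for all $p,q\in[1,\infty]$ there is $c_{p,q}>0$ independent of $\delta$ with $$R(p,q,\delta)\ge c_{p,q}(\log\delta^{-1})^{2/p}$$ for all sufficiently small $\delta>0$. In particular, $R(p,q)=\infty$ whenever $p<\infty$.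
   Context: For $S\subseteq\mathbb{R}^2$ and $\delta>0$, the vertical $\delta$-thickening is $S(\delta):=\{x+(0,\varepsilon): x\in S,\ -\delta\le\varepsilon\le\delta\}$. For $g:\mathbb{R}^2\to\mathbb{C}$ and $a\in[1,2]$ define $$\mathcal R g(a)=\sup_{(x_1,x_2)\in\mathbb{R}^2}\int_0^1|g(x_1+t,\,x_2+af(t))|\,dt,\qquad \mathcal R_\delta g(a)=\sup_{(x_1,x_2)\in\mathbb{R}^2}(2\delta)^{-1}\int_0^1\int_{-\delta}^{\delta}|g(x_1+t,\,x_2+af(t)+s)|\,ds\,dt,$$ and for $p,q\in[1,\infty]$ let $R(p,q)=\sup_{g\ne0}\|\mathcal R g\|_{L^q([1,2])}/\|g\|_{L^p(\mathbb{R}^2)}$ and $R(p,q,\delta)=\sup_{g\ne0}\|\mathcal R_\delta g\|_{L^q([1,2])}/\|g\|_{L^p(\mathbb{R}^2)}$. $|\cdot|$ denotes Lebesgue measure. *)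

theory Defs
  imports "HOL-Analysis.Analysis"
begin

text \<open>Real powers of extended nonnegative reals (used with positive exponents only).\<close>
definition enn_powr :: "ennreal \<Rightarrow> real \<Rightarrow> ennreal" where
  "enn_powr x r = (if x = top then top else ennreal (enn2real x powr r))"

definition ess_sup_enn :: "'a measure \<Rightarrow> ('a \<Rightarrow> ennreal) \<Rightarrow> ennreal" where
  "ess_sup_enn M h = Inf {c. AE x in M. h x \<le> c}"

definition Lp_norm :: "'a measure \<Rightarrow> ennreal \<Rightarrow> ('a \<Rightarrow> ennreal) \<Rightarrow> ennreal" where
  "Lp_norm M p h =
     (if p = top then ess_sup_enn M h
      else enn_powr (\<integral>\<^sup>+ x. enn_powr (h x) (enn2real p) \<partial>M) (1 / enn2real p))"

definition vthick :: "(real \<times> real) set \<Rightarrow> real \<Rightarrow> (real \<times> real) set" where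
  "vthick S \<delta> = {x + (0, \<epsilon>) | x \<epsilon>. x \<in> S \<and> -\<delta> \<le> \<epsilon> \<and> \<epsilon> \<le> \<delta>}"

definition Rop :: "(real \<Rightarrow> real) \<Rightarrow> (real \<times> real \<Rightarrow> complex) \<Rightarrow> real \<Rightarrow> ennreal" where
  "Rop f g a = (SUP x \<in> (UNIV :: (real \<times> real) set).
      \<integral>\<^sup>+ t. ennreal (norm (g (fst x + t, snd x + a * f t))) \<partial>(lebesgue_on {0..1}))"

definition Rop_delta :: "(real \<Rightarrow> real) \<Rightarrow> real \<Rightarrow> (real \<times> real \<Rightarrow> complex) \<Rightarrow> real \<Rightarrow> ennreal" where
  "Rop_delta f \<delta> g a = (SUP x \<in> (UNIV :: (real \<times> real) set).
      ennreal (1 / (2 * \<delta>)) *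
      (\<integral>\<^sup>+ t. (\<integral>\<^sup>+ s. ennreal (norm (g (fst x + t, snd x + a * f t + s))) \<partial>(lebesgue_on {-\<delta>..\<delta>}))
        \<partial>(lebesgue_on {0..1})))"

definition Lp_test :: "ennreal \<Rightarrow> (real \<times> real \<Rightarrow> complex) set" where
  "Lp_test p = {g. g \<in> borel_measurable borel \<and>
      Lp_norm lebesgue p (\<lambda>x. ennreal (norm (g x))) \<noteq> 0 \<and>
      Lp_norm lebesgue p (\<lambda>x. ennreal (norm (g x))) < top}"

definition Rpq :: "(real \<Rightarrow> real) \<Rightarrow> ennreal \<Rightarrow> ennreal \<Rightarrow> ennreal" where
  "Rpq f p q = (SUP g \<in> Lp_test p.
      Lp_norm (lebesgue_on {1..2}) q (Rop f g) / Lp_norm lebesgue p (\<lambda>x. ennreal (norm (g x))))"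

definition Rpq_delta :: "(real \<Rightarrow> real) \<Rightarrow> ennreal \<Rightarrow> ennreal \<Rightarrow> real \<Rightarrow> ennreal" where
  "Rpq_delta f p q \<delta> = (SUP g \<in> Lp_test p.
      Lp_norm (lebesgue_on {1..2}) q (Rop_delta f \<delta> g) / Lp_norm lebesgue p (\<lambda>x. ennreal (norm (g x))))"

end

theory Submission
  imports Defs "HOL-Library.Discrete_Functions"
begin

lemma mvt_abs_bound:
  fixes \<phi> \<phi>' :: "real \<Rightarrow> real"
  assumes ab: "a \<le> b" and cont: "continuous_on {a..b} \<phi>"
    and der: "\<And>x. a < x \<Longrightarrow> x < b \<Longrightarrow> (\<phi> has_real_derivative \<phi>' x) (at x)"
    and bd: "\<And>x. a < x \<Longrightarrow> x < b \<Longrightarrow> \<bar>\<phi>' x\<bar> \<le> K"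
  shows "\<bar>\<phi> b - \<phi> a\<bar> \<le> K * (b - a)"
proof (cases "a = b")
  case True thus ?thesis by simp
next
  case False
  with ab have lt: "a < b" by simp
  have "\<And>x. a < x \<Longrightarrow> x < b \<Longrightarrow> \<phi> differentiable (at x)"
    using der real_differentiable_def by blast
  from MVT[OF lt cont this] obtain l z where z: "a < z" "z < b" "DERIV \<phi> z :> l" "\<phi> b - \<phi> a = (b - a) * l"
    by blast
  then have "l = \<phi>' z" using der[OF z(1,2)] DERIV_unique by blast
  then have "\<bar>\<phi> b - \<phi> a\<bar> = \<bar>\<phi>' z\<bar> * (b - a)" using z lt by (simp add: abs_mult)
  also have "\<dots> \<le> K * (b - a)" using bd[OF z(1,2)] lt by (intro mult_right_mono) auto
  finally show ?thesis .
qed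

locale kset =
  fixes f f' f'' f''' :: "real \<Rightarrow> real" and m B0 B1 B2 B3 :: real and M :: nat
  assumes d1: "\<And>x. x \<in> {0..1} \<Longrightarrow> (f has_real_derivative f' x) (at x within {0..1})"
  and d2: "\<And>x. x \<in> {0..1} \<Longrightarrow> (f' has_real_derivative f'' x) (at x within {0..1})"
  and c2: "continuous_on {0..1} f''"
  and d3: "\<And>x. x \<in> {0<..<1} \<Longrightarrow> (f'' has_real_derivative f''' x) (at x)"
  and mpos: "m > 0" and mle: "\<And>x. x \<in> {0..1} \<Longrightarrow> m \<le> f'' x"
  and b0: "\<And>x. x \<in> {0..1} \<Longrightarrow> \<bar>f x\<bar> \<le> B0"
  and b1: "\<And>x. x \<in> {0..1} \<Longrightarrow> \<bar>f' x\<bar> \<le> B1"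
  and b2: "\<And>x. x \<in> {0..1} \<Longrightarrow> \<bar>f'' x\<bar> \<le> B2"
  and b3: "\<And>x. x \<in> {0<..<1} \<Longrightarrow> \<bar>f''' x\<bar> \<le> B3"
  and Mpos: "M \<ge> 1" and Mbig: "B1 / m \<le> real M / 8"
begin

lemma B0nn: "B0 \<ge> 0" using b0[of 0] by auto
lemma B1nn: "B1 \<ge> 0" using b1[of 0] by auto
lemma B2nn: "B2 \<ge> 0" using b2[of 0] by auto
lemma B3nn: "B3 \<ge> 0" using b3[of "1/2"] by auto

lemma contf: "continuous_on {0..1} f"
  using d1 by (meson DERIV_continuous continuous_on_eq_continuous_within)
lemma contf': "continuous_on {0..1} f'"
  using d2 by (meson DERIV_continuous continuous_on_eq_continuous_within)

lemma d1at: "x \<in> {0<..<1} \<Longrightarrow> (f has_real_derivative f' x) (at x)"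
  using d1[of x] at_within_interior[of x "{0..1::real}"] by auto
lemma d2at: "x \<in> {0<..<1} \<Longrightarrow> (f' has_real_derivative f'' x) (at x)"
  using d2[of x] at_within_interior[of x "{0..1::real}"] by auto

lemma gen_bound:
  fixes \<phi> \<phi>' :: "real \<Rightarrow> real"
  assumes vw: "v \<in> {0..1}" "w \<in> {0..1}" and cont: "continuous_on {0..1} \<phi>"
    and der: "\<And>x. x \<in> {0<..<1} \<Longrightarrow> (\<phi> has_real_derivative \<phi>' x) (at x)"
    and bd: "\<And>x. min v w < x \<Longrightarrow> x < max v w \<Longrightarrow> \<bar>\<phi>' x\<bar> \<le> K"
  shows "\<bar>\<phi> v - \<phi> w\<bar> \<le> K * \<bar>v - w\<bar>"
proof -
  have sub: "{min v w..max v w} \<subseteq> {0..1}" using vw by auto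
  have "\<bar>\<phi> (max v w) - \<phi> (min v w)\<bar> \<le> K * (max v w - min v w)"
  proof (rule mvt_abs_bound)
    show "continuous_on {min v w..max v w} \<phi>" using continuous_on_subset[OF cont sub] .
    show "(\<phi> has_real_derivative \<phi>' x) (at x)" if "min v w < x" "x < max v w" for x
      using that vw by (intro der) (auto simp: min_def max_def split: if_splits)
  qed (use bd in auto)
  then show ?thesis by (cases "v \<le> w") (auto simp: abs_minus_commute)
qed

lemma T5: "v \<in> {0..1} \<Longrightarrow> w \<in> {0..1} \<Longrightarrow> \<bar>f v - f w\<bar> \<le> B1 * \<bar>v - w\<bar>"
  by (rule gen_bound[OF _ _ contf d1at]) (auto intro!: b1)

lemma T1: "v \<in> {0..1} \<Longrightarrow> w \<in> {0..1} \<Longrightarrow> \<bar>f' v - f' w\<bar> \<le> B2 * \<bar>v - w\<bar>"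
  by (rule gen_bound[OF _ _ contf' d2at]) (auto intro!: b2)

lemma T3: "v \<in> {0..1} \<Longrightarrow> w \<in> {0..1} \<Longrightarrow> \<bar>f'' v - f'' w\<bar> \<le> B3 * \<bar>v - w\<bar>"
  by (rule gen_bound[OF _ _ c2 d3]) (auto intro!: b3)

lemma T2: assumes "v \<in> {0..1}" "w \<in> {0..1}"
  shows "\<bar>f v - f w - f' w * (v - w)\<bar> \<le> B2 * (v - w)\<^sup>2"
proof -
  let ?\<phi> = "\<lambda>s. f s - f w - f' w * (s - w)"
  have "\<bar>?\<phi> v - ?\<phi> w\<bar> \<le> (B2 * \<bar>v - w\<bar>) * \<bar>v - w\<bar>"
  proof (rule gen_bound[OF assms, where \<phi>' = "\<lambda>s. f' s - f' w"])
    show "continuous_on {0..1} ?\<phi>" by (intro continuous_intros contf)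
    show "(?\<phi> has_real_derivative f' x - f' w) (at x)" if "x \<in> {0<..<1}" for x
      using d1at[OF that] by (auto intro!: derivative_eq_intros)
    show "\<bar>f' x - f' w\<bar> \<le> B2 * \<bar>v - w\<bar>" if "min v w < x" "x < max v w" for x
    proof -
      have "x \<in> {0..1}" using that assms by auto
      then have "\<bar>f' x - f' w\<bar> \<le> B2 * \<bar>x - w\<bar>" using T1 assms by auto
      also have "\<dots> \<le> B2 * \<bar>v - w\<bar>" using that B2nn by (intro mult_left_mono) auto
      finally show ?thesis .
    qed
  qed
  then show ?thesis by (simp add: power2_eq_square abs_mult_self mult.assoc)
qed

lemma T4: assumes "v \<in> {0..1}" "w \<in> {0..1}"
  shows "\<bar>f' v - f' w - f'' w * (v - w)\<bar> \<le> B3 * (v - w)\<^sup>2"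
proof -
  let ?\<phi> = "\<lambda>s. f' s - f' w - f'' w * (s - w)"
  have "\<bar>?\<phi> v - ?\<phi> w\<bar> \<le> (B3 * \<bar>v - w\<bar>) * \<bar>v - w\<bar>"
  proof (rule gen_bound[OF assms, where \<phi>' = "\<lambda>s. f'' s - f'' w"])
    show "continuous_on {0..1} ?\<phi>" by (intro continuous_intros contf')
    show "(?\<phi> has_real_derivative f'' x - f'' w) (at x)" if "x \<in> {0<..<1}" for x
      using d2at[OF that] by (auto intro!: derivative_eq_intros)
    show "\<bar>f'' x - f'' w\<bar> \<le> B3 * \<bar>v - w\<bar>" if "min v w < x" "x < max v w" for x
    proof -
      have "x \<in> {0..1}" using that assms by auto
      then have "\<bar>f'' x - f'' w\<bar> \<le> B3 * \<bar>x - w\<bar>" using T3 assms by auto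
      also have "\<dots> \<le> B3 * \<bar>v - w\<bar>" using that B3nn by (intro mult_left_mono) auto
      finally show ?thesis .
    qed
  qed
  then show ?thesis by (simp add: power2_eq_square abs_mult_self mult.assoc)
qed

end

definition rr :: "nat \<Rightarrow> real" where
  "rr i = (if even (floor_log i) then real (i - 2 ^ floor_log i) / 2 ^ floor_log i
           else 1 - real (i - 2 ^ floor_log i) / 2 ^ floor_log i)"

lemma rr_block:
  assumes "2 ^ c \<le> i" "i < 2 ^ Suc c"
  shows "rr i = (if even c then real (i - 2 ^ c) / 2 ^ c else 1 - real (i - 2 ^ c) / 2 ^ c)"
proof -
  have "i > 0" using assms(1) by (metis gr0I le_zero_eq power_not_zero zero_neq_numeral)
  then have "floor_log i = c" using assms by (intro floor_log_eqI) auto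
  then show ?thesis unfolding rr_def by simp
qed

lemma rr_range: "0 \<le> rr i \<and> rr i \<le> 1"
proof -
  have "i - 2 ^ floor_log i \<le> 2 ^ floor_log i"
    using floor_log_exp2_gt[of i] by simp
  then have "real (i - 2 ^ floor_log i) \<le> 2 ^ floor_log i"
    by (metis of_nat_le_iff of_nat_numeral of_nat_power)
  then have "real (i - 2 ^ floor_log i) / 2 ^ floor_log i \<le> 1" by simp
  then show ?thesis unfolding rr_def by auto
qed

lemma rr_step:
  assumes "2 ^ b \<le> i"
  shows "\<bar>rr (Suc i) - rr i\<bar> \<le> 1 / 2 ^ b"
proof -
  define c where "c = floor_log i"
  have ipos: "i > 0" using assms by (metis gr0I le_zero_eq power_not_zero zero_neq_numeral)
  have ci: "2 ^ c \<le> i" "i < 2 ^ Suc c"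
    using floor_log_exp2_le[OF ipos] floor_log_exp2_gt[of i] unfolding c_def by auto
  have "b \<le> c" unfolding c_def using floor_log_le_iff[OF assms] by simp
  then have bc: "1 / (2::real) ^ c \<le> 1 / 2 ^ b" by (intro divide_left_mono) (auto intro: power_increasing)
  have ri: "rr i = (if even c then real (i - 2 ^ c) / 2 ^ c else 1 - real (i - 2 ^ c) / 2 ^ c)"
    by (rule rr_block[OF ci])
  show ?thesis
  proof (cases "Suc i < 2 ^ Suc c")
    case True
    have rs: "rr (Suc i) = (if even c then real (Suc i - 2 ^ c) / 2 ^ c else 1 - real (Suc i - 2 ^ c) / 2 ^ c)"
      using ci True by (intro rr_block) auto
    have "real (Suc i - 2 ^ c) = real (i - 2 ^ c) + 1" using ci by (simp add: Suc_diff_le)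
    then have "\<bar>rr (Suc i) - rr i\<bar> = 1 / 2 ^ c" using ri rs by (auto simp: add_divide_distrib)
    then show ?thesis using bc by simp
  next
    case False
    then have eq: "Suc i = 2 ^ Suc c" using ci by simp
    have rs: "rr (Suc i) = (if even (Suc c) then real (Suc i - 2 ^ Suc c) / 2 ^ Suc c
                          else 1 - real (Suc i - 2 ^ Suc c) / 2 ^ Suc c)"
      using eq by (intro rr_block) auto
    have j: "i - 2 ^ c = 2 ^ c - 1" using eq by simp
    have j': "real (i - 2 ^ c) = 2 ^ c - 1" unfolding j by (simp add: of_nat_diff)
    have "\<bar>rr (Suc i) - rr i\<bar> = 1 / 2 ^ c"
      using ri rs eq j' by (auto simp: diff_divide_distrib)
    then show ?thesis using bc by simp
  qed
qed

lemma rr_lip: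
  assumes "2 ^ b \<le> k" "k \<le> i"
  shows "\<bar>rr i - rr k\<bar> \<le> real (i - k) / 2 ^ b"
  using assms(2)
proof (induction i rule: dec_induct)
  case base then show ?case by simp
next
  case (step n)
  have "\<bar>rr (Suc n) - rr k\<bar> \<le> \<bar>rr (Suc n) - rr n\<bar> + \<bar>rr n - rr k\<bar>" by linarith
  also have "\<dots> \<le> 1 / 2 ^ b + real (n - k) / 2 ^ b"
    using rr_step[of b n] step assms(1) by (intro add_mono) auto
  also have "\<dots> = real (Suc n - k) / 2 ^ b" using step(1) by (simp add: Suc_diff_le add_divide_distrib)
  finally show ?case .
qed

lemma rr_net:
  assumes "0 \<le> z" "z \<le> 1"
  shows "\<exists>k. 2 ^ b \<le> k \<and> k < 2 ^ Suc b \<and> \<bar>z - rr k\<bar> \<le> 1 / 2 ^ b"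
proof -
  define zz where "zz = (if even b then z else 1 - z)"
  have zz: "0 \<le> zz" "zz \<le> 1" using assms unfolding zz_def by auto
  define j where "j = min (nat \<lfloor>zz * 2 ^ b\<rfloor>) (2 ^ b - 1)"
  have jle: "j \<le> 2 ^ b - 1" unfolding j_def by (rule min.cobounded2)
  have "(0::nat) < 2 ^ b" by simp
  then have jlt: "j < 2 ^ b" using jle by linarith
  have j1: "real j \<le> zz * 2 ^ b"
  proof -
    have "real j \<le> real (nat \<lfloor>zz * 2 ^ b\<rfloor>)" unfolding j_def by simp
    also have "\<dots> = of_int \<lfloor>zz * 2 ^ b\<rfloor>" using zz by (intro of_nat_nat) simp
    also have "\<dots> \<le> zz * 2 ^ b" by simp
    finally show ?thesis .
  qed
  have j2: "zz * 2 ^ b \<le> real j + 1"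
  proof (cases "nat \<lfloor>zz * 2 ^ b\<rfloor> \<le> 2 ^ b - 1")
    case True
    then have "j = nat \<lfloor>zz * 2 ^ b\<rfloor>" unfolding j_def by simp
    then have "real j = of_int \<lfloor>zz * 2 ^ b\<rfloor>" using zz by (simp add: of_nat_nat)
    moreover have "zz * 2 ^ b < of_int \<lfloor>zz * 2 ^ b\<rfloor> + 1" by (rule real_of_int_floor_add_one_gt)
    ultimately show ?thesis by linarith
  next
    case False
    then have "j = 2 ^ b - 1" unfolding j_def by simp
    then have "real j + 1 = 2 ^ b" by (simp add: of_nat_diff)
    then show ?thesis using zz by simp
  qed
  define k where "k = 2 ^ b + j"
  have kb: "2 ^ b \<le> k" "k < 2 ^ Suc b" using jlt unfolding k_def by auto
  have rk: "rr k = (if even b then real j / 2 ^ b else 1 - real j / 2 ^ b)"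
    using rr_block[OF kb] unfolding k_def by simp
  have "\<bar>zz * 2 ^ b - real j\<bar> \<le> 1" using j1 j2 by auto
  then have "\<bar>zz * 2 ^ b - real j\<bar> / 2 ^ b \<le> 1 / 2 ^ b" by (simp add: divide_right_mono)
  moreover have "zz - real j / 2 ^ b = (zz * 2 ^ b - real j) / 2 ^ b" by (simp add: field_simps)
  ultimately have "\<bar>zz - real j / 2 ^ b\<bar> \<le> 1 / 2 ^ b" by (simp add: abs_divide)
  then have "\<bar>z - rr k\<bar> \<le> 1 / 2 ^ b" using rk unfolding zz_def by (auto split: if_splits)
  then show ?thesis using kb by blast
qed

lemma sq_sum_closed: "(\<Sum>j<n. (1 + real j)\<^sup>2 / 2 ^ j) = 12 - 2 * (real n ^ 2 + 4 * real n + 6) / 2 ^ n"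
proof (induction n)
  case 0 then show ?case by simp
next
  case (Suc n)
  have "(\<Sum>j<Suc n. (1 + real j)\<^sup>2 / 2 ^ j) = (\<Sum>j<n. (1 + real j)\<^sup>2 / 2 ^ j) + (1 + real n)\<^sup>2 / 2 ^ n"
    by simp
  also have "\<dots> = 12 - 2 * (real n ^ 2 + 4 * real n + 6) / 2 ^ n + (1 + real n)\<^sup>2 / 2 ^ n"
    using Suc.IH by simp
  also have "\<dots> = 12 - 2 * (real (Suc n) ^ 2 + 4 * real (Suc n) + 6) / 2 ^ Suc n"
    by (simp add: field_simps power2_eq_square)
  finally show ?case .
qed

lemma sq_sum_le: "(\<Sum>j<n. (1 + real j)\<^sup>2 / 2 ^ j) \<le> 12"
  unfolding sq_sum_closed by (simp add: field_simps)

lemma geo4_sum_le: "(\<Sum>j<n. 1 / (4::real) ^ j) \<le> 2"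
proof -
  have "(\<Sum>j<n. 1 / (4::real) ^ j) = (\<Sum>j<n. (1/4) ^ j)" by (simp add: power_one_over)
  also have "\<dots> = ((1/4)^n - 1) / (1/4 - 1)" by (rule geometric_sum) simp
  also have "\<dots> \<le> 2" by (simp add: field_simps)
  finally show ?thesis .
qed

context kset begin

definition H :: "nat \<Rightarrow> real" where "H i = 1 / (real M * 2 ^ Suc i)"
definition Rr :: "nat \<Rightarrow> real" where "Rr i = 1/8 + 3/4 * rr i"
definition Xm :: real where "Xm = B1 / m"
definition Ym :: real where "Ym = Xm * B1 + B0"
definition C1 :: real where "C1 = B2 + Xm * B3"
definition C2 :: real where "C2 = 2 * B2 * Xm\<^sup>2 + B1 * Xm"

definition stepf :: "nat \<Rightarrow> bool \<Rightarrow> real \<times> real \<times> real \<Rightarrow> real \<times> real \<times> real" where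
  "stepf n b p = (if b then (fst p + H n,
       fst (snd p) + H n * (f' (Rr n - fst (snd p)) / f'' (Rr n - fst (snd p)) / fst p),
       snd (snd p) + H n * (f' (Rr n - fst (snd p)) / f'' (Rr n - fst (snd p)) * f' (Rr n - fst (snd p))
                            - f (Rr n - fst (snd p)))) else p)"

primrec st :: "real \<Rightarrow> (nat \<Rightarrow> bool) \<Rightarrow> nat \<Rightarrow> real \<times> real \<times> real" where
  "st A \<omega> 0 = (A, 0, 0)"
| "st A \<omega> (Suc n) = stepf n (\<omega> n) (st A \<omega> n)"

definition P :: "real \<Rightarrow> real \<times> real \<times> real \<Rightarrow> real" where
  "P u p = snd (snd p) + fst p * f (u - fst (snd p))"

definition Sg :: "nat \<Rightarrow> real" where "Sg n = (\<Sum>i<n. H i)"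

lemma Mpos': "real M \<ge> 1" using Mpos by simp
lemma H_pos: "H i > 0" unfolding H_def using Mpos' by simp
lemma H_Suc: "H (Suc i) = H i / 2" unfolding H_def by simp
lemma H_shift: "H (k + j) = H k / 2 ^ j" unfolding H_def by (simp add: power_add)

lemma Sg_closed: "Sg n = (1 - 1 / 2 ^ n) / real M"
proof (induction n)
  case 0 then show ?case by (simp add: Sg_def)
next
  case (Suc n)
  have "Sg (Suc n) = Sg n + H n" by (simp add: Sg_def)
  also have "\<dots> = (1 - 1 / 2 ^ Suc n) / real M" using Suc Mpos' unfolding H_def by (simp add: field_simps)
  finally show ?case .
qed

lemma Sg_le: "Sg n \<le> 1 / real M" unfolding Sg_closed using Mpos' by (simp add: divide_right_mono)
lemma Sg_nn: "Sg n \<ge> 0" unfolding Sg_def using H_pos by (simp add: sum_nonneg less_imp_le)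
lemma Sg_Suc: "Sg (Suc n) = Sg n + H n" by (simp add: Sg_def)

lemma Xm_nn: "Xm \<ge> 0" unfolding Xm_def using B1nn mpos by simp
lemma Xm_small: "Xm / real M \<le> 1/8"
proof -
  have "Xm / real M \<le> (real M / 8) / real M" using Mbig Mpos' unfolding Xm_def by (intro divide_right_mono) auto
  then show ?thesis using Mpos' by simp
qed
lemma Xm_Sg: "Xm * Sg n \<le> 1/8"
proof -
  have "Xm * Sg n \<le> Xm * (1 / real M)" using Sg_le Xm_nn by (intro mult_left_mono)
  moreover have "Xm * (1 / real M) = Xm / real M" by simp
  ultimately show ?thesis using Xm_small by linarith
qed

lemma Rr_range: "1/8 \<le> Rr i \<and> Rr i \<le> 7/8" unfolding Rr_def using rr_range[of i] by auto

lemma qbounds: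
  assumes "w \<in> {0..1}"
  shows "\<bar>f' w / f'' w\<bar> \<le> Xm" "\<bar>f' w / f'' w * f' w - f w\<bar> \<le> Ym"
proof -
  have fpos: "f'' w \<ge> m" using mle assms by auto
  then have "\<bar>f' w / f'' w\<bar> = \<bar>f' w\<bar> / f'' w" using mpos by (simp add: abs_divide)
  also have "\<dots> \<le> B1 / m" using b1[OF assms] fpos mpos B1nn by (intro frac_le) auto
  finally show q: "\<bar>f' w / f'' w\<bar> \<le> Xm" unfolding Xm_def .
  have "\<bar>f' w / f'' w * f' w - f w\<bar> \<le> \<bar>f' w / f'' w\<bar> * \<bar>f' w\<bar> + \<bar>f w\<bar>"
    by (metis abs_mult abs_triangle_ineq4)
  also have "\<dots> \<le> Xm * B1 + B0" using q b1[OF assms] b0[OF assms] Xm_nn by (intro add_mono mult_mono) auto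
  finally show "\<bar>f' w / f'' w * f' w - f w\<bar> \<le> Ym" unfolding Ym_def .
qed

lemma st_inv:
  assumes A: "1 \<le> A" "A + 1 / real M \<le> 2"
  shows "A \<le> fst (st A \<omega> n) \<and> fst (st A \<omega> n) \<le> A + Sg n \<and>
         \<bar>fst (snd (st A \<omega> n))\<bar> \<le> Xm * Sg n \<and> \<bar>snd (snd (st A \<omega> n))\<bar> \<le> Ym * Sg n"
proof (induction n)
  case 0 then show ?case by (simp add: Sg_def)
next
  case (Suc n)
  obtain a x1 x2 where p: "st A \<omega> n = (a, x1, x2)" by (metis prod.exhaust)
  have IH: "A \<le> a" "a \<le> A + Sg n" "\<bar>x1\<bar> \<le> Xm * Sg n" "\<bar>x2\<bar> \<le> Ym * Sg n" using Suc p by auto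
  have Ym_nn: "Ym \<ge> 0" unfolding Ym_def using Xm_nn B1nn B0nn by simp
  show ?case
  proof (cases "\<omega> n")
    case False
    then have "st A \<omega> (Suc n) = (a, x1, x2)" using p by (simp add: stepf_def)
    have "Sg n \<le> Sg n + H n" using H_pos[of n] by simp
    then have "Xm * Sg n \<le> Xm * (Sg n + H n)" "Ym * Sg n \<le> Ym * (Sg n + H n)"
      using Xm_nn Ym_nn by (auto intro: mult_left_mono)
    then show ?thesis using IH \<open>st A \<omega> (Suc n) = (a, x1, x2)\<close> \<open>Sg n \<le> Sg n + H n\<close>
      unfolding Sg_Suc by simp
  next
    case True
    define w where "w = Rr n - x1"
    have w: "w \<in> {0..1}" using Rr_range[of n] IH(3) Xm_Sg[of n] unfolding w_def by auto
    have a1: "a \<ge> 1" using IH A by simp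
    have st1: "st A \<omega> (Suc n) = (a + H n, x1 + H n * (f' w / f'' w / a), x2 + H n * (f' w / f'' w * f' w - f w))"
      using p True by (simp add: stepf_def w_def)
    have X: "\<bar>f' w / f'' w / a\<bar> \<le> Xm"
    proof -
      define Q where "Q = f' w / f'' w"
      have "\<bar>Q / a\<bar> = \<bar>Q\<bar> / a" using a1 by (simp add: abs_divide)
      also have "\<dots> \<le> \<bar>Q\<bar> / 1" using a1 by (intro divide_left_mono) auto
      finally show ?thesis using qbounds(1)[OF w] unfolding Q_def by simp
    qed
    have hp: "H n \<ge> 0" using H_pos[of n] by simp
    have "\<bar>x1 + H n * (f' w / f'' w / a)\<bar> \<le> \<bar>x1\<bar> + H n * \<bar>f' w / f'' w / a\<bar>"
      using hp by (metis abs_mult abs_of_nonneg abs_triangle_ineq)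
    also have "\<dots> \<le> Xm * Sg n + H n * Xm" using IH(3) X hp by (intro add_mono mult_left_mono) auto
    finally have 1: "\<bar>x1 + H n * (f' w / f'' w / a)\<bar> \<le> Xm * Sg n + H n * Xm" .
    have "\<bar>x2 + H n * (f' w / f'' w * f' w - f w)\<bar> \<le> \<bar>x2\<bar> + H n * \<bar>f' w / f'' w * f' w - f w\<bar>"
      using hp by (metis abs_mult abs_of_nonneg abs_triangle_ineq)
    also have "\<dots> \<le> Ym * Sg n + H n * Ym" using IH(4) qbounds(2)[OF w] hp by (intro add_mono mult_left_mono) auto
    finally have 2: "\<bar>x2 + H n * (f' w / f'' w * f' w - f w)\<bar> \<le> Ym * Sg n + H n * Ym" .
    show ?thesis using 1 2 st1 IH hp unfolding Sg_Suc by (simp add: algebra_simps)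
  qed
qed

end

context kset begin

lemma C1_nn: "C1 \<ge> 0" unfolding C1_def using B2nn B3nn Xm_nn by simp
lemma C2_nn: "C2 \<ge> 0" unfolding C2_def using B2nn B1nn Xm_nn by simp

lemma incr:
  assumes A: "1 \<le> A" "A + 1 / real M \<le> 2" and u: "u \<in> {1/8..7/8}"
  shows "\<bar>P u (st A \<omega> (Suc n)) - P u (st A \<omega> n)\<bar> \<le> C1 * H n * (u - Rr n)\<^sup>2 + C2 * H n ^ 2"
proof -
  obtain a x1 x2 where p: "st A \<omega> n = (a, x1, x2)" by (metis prod.exhaust)
  have IH: "A \<le> a" "a \<le> A + Sg n" "\<bar>x1\<bar> \<le> Xm * Sg n" using st_inv[OF A, of \<omega> n] p by auto
  have rhs_nn: "0 \<le> C1 * H n * (u - Rr n)\<^sup>2 + C2 * H n ^ 2"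
    using C1_nn C2_nn H_pos[of n] by simp
  show ?thesis
  proof (cases "\<omega> n")
    case False
    then have "st A \<omega> (Suc n) = st A \<omega> n" by (simp add: stepf_def)
    then show ?thesis using rhs_nn by simp
  next
    case True
    define h where "h = H n"
    define w where "w = Rr n - x1"
    define Q where "Q = f' w / f'' w"
    define X where "X = Q / a"
    define Y where "Y = Q * f' w - f w"
    have hp: "h > 0" unfolding h_def by (rule H_pos)
    have st1: "st A \<omega> (Suc n) = (a + h, x1 + h * X, x2 + h * Y)"
      using p True by (simp add: stepf_def w_def Q_def X_def Y_def h_def)
    have x1': "\<bar>x1 + h * X\<bar> \<le> 1/8"
      using st_inv[OF A, of \<omega> "Suc n"] st1 Xm_Sg[of "Suc n"] by simp
    have x1b: "\<bar>x1\<bar> \<le> 1/8" using IH(3) Xm_Sg[of n] by simp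
    have w: "w \<in> {0..1}" using Rr_range[of n] x1b unfolding w_def by auto
    define v where "v = u - x1"
    define v' where "v' = u - (x1 + h * X)"
    have v: "v \<in> {0..1}" using u x1b unfolding v_def by auto
    have v': "v' \<in> {0..1}" using u abs_le_D1[OF x1'] abs_le_D2[OF x1'] unfolding v'_def by auto
    have a1: "1 \<le> a" "a \<le> 2" using IH A Sg_le[of n] by auto
    have fpos: "f'' w > 0" using mle[OF w] mpos by simp
    have Qf: "Q * f'' w = f' w" unfolding Q_def using fpos by simp
    have aX: "a * X = Q" unfolding X_def using a1 by simp
    have Qb: "\<bar>Q\<bar> \<le> Xm" unfolding Q_def by (rule qbounds(1)[OF w])
    have Xb: "\<bar>X\<bar> \<le> Xm"
    proof -
      have "\<bar>X\<bar> = \<bar>Q\<bar> / a" unfolding X_def using a1 by (simp add: abs_divide)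
      also have "\<dots> \<le> \<bar>Q\<bar> / 1" using a1 by (intro divide_left_mono) auto
      finally show ?thesis using Qb by simp
    qed
    define L where "L = Y + f v - Q * f' v"
    define E1 where "E1 = f v' - f v - f' v * (v' - v)"
    define E2 where "E2 = f v' - f v"
    have vv: "v' - v = - (h * X)" unfolding v_def v'_def by simp
    have D: "P u (st A \<omega> (Suc n)) - P u (st A \<omega> n) = h * L + a * E1 + h * E2"
    proof -
      have "P u (st A \<omega> (Suc n)) - P u (st A \<omega> n) = h * Y + (a + h) * f v' - a * f v"
        unfolding st1 p P_def v_def v'_def by simp
      also have "\<dots> = h * L + a * E1 + h * E2"
        unfolding L_def E1_def E2_def vv using aX by (simp add: algebra_simps)
      finally show ?thesis .
    qed
    have Lform: "L = (f v - f w - f' w * (v - w)) - Q * (f' v - f' w - f'' w * (v - w))"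
    proof -
      have "(f v - f w - f' w * (v - w)) - Q * (f' v - f' w - f'' w * (v - w))
          = f v - f w - f' w * (v - w) - Q * f' v + Q * f' w + (Q * f'' w) * (v - w)"
        by (simp add: algebra_simps)
      also have "\<dots> = Y + f v - Q * f' v" unfolding Qf Y_def by (simp add: algebra_simps)
      finally show ?thesis unfolding L_def by simp
    qed
    have vw: "v - w = u - Rr n" unfolding v_def w_def by simp
    have Lb: "\<bar>L\<bar> \<le> C1 * (u - Rr n)\<^sup>2"
    proof -
      have "\<bar>L\<bar> \<le> \<bar>f v - f w - f' w * (v - w)\<bar> + \<bar>Q\<bar> * \<bar>f' v - f' w - f'' w * (v - w)\<bar>"
        unfolding Lform using abs_triangle_ineq4[of "f v - f w - f' w * (v - w)" "Q * (f' v - f' w - f'' w * (v - w))"] by (simp add: abs_mult)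
      also have "\<dots> \<le> B2 * (v - w)\<^sup>2 + Xm * (B3 * (v - w)\<^sup>2)"
        using T2[OF v w] T4[OF v w] Qb by (intro add_mono mult_mono) auto
      also have "\<dots> = C1 * (u - Rr n)\<^sup>2" unfolding C1_def vw by (simp add: algebra_simps)
      finally show ?thesis .
    qed
    have E1b: "\<bar>E1\<bar> \<le> B2 * Xm\<^sup>2 * h\<^sup>2"
    proof -
      have "\<bar>E1\<bar> \<le> B2 * (v' - v)\<^sup>2" unfolding E1_def using T2[OF v' v] .
      also have "(v' - v)\<^sup>2 = h\<^sup>2 * X\<^sup>2" unfolding vv by (simp add: power_mult_distrib)
      also have "X\<^sup>2 \<le> Xm\<^sup>2" using Xb Xm_nn power_mono[of "\<bar>X\<bar>" Xm 2] by simp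
      then have "B2 * (h\<^sup>2 * X\<^sup>2) \<le> B2 * (h\<^sup>2 * Xm\<^sup>2)" using B2nn by (intro mult_left_mono) auto
      finally show ?thesis by (simp add: algebra_simps)
    qed
    have E2b: "\<bar>E2\<bar> \<le> B1 * Xm * h"
    proof -
      have "\<bar>E2\<bar> \<le> B1 * \<bar>v' - v\<bar>" unfolding E2_def using T5[OF v' v] .
      also have "\<bar>v' - v\<bar> = h * \<bar>X\<bar>" unfolding vv using hp by (simp add: abs_mult)
      also have "B1 * (h * \<bar>X\<bar>) \<le> B1 * (h * Xm)" using B1nn hp Xb by (intro mult_left_mono) auto
      finally show ?thesis by (simp add: algebra_simps)
    qed
    have "\<bar>h * L + a * E1 + h * E2\<bar> \<le> h * \<bar>L\<bar> + a * \<bar>E1\<bar> + h * \<bar>E2\<bar>"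
    proof -
      have "\<bar>h * L + a * E1 + h * E2\<bar> \<le> \<bar>h * L\<bar> + \<bar>a * E1\<bar> + \<bar>h * E2\<bar>"
        using abs_triangle_ineq[of "h * L + a * E1" "h * E2"] abs_triangle_ineq[of "h * L" "a * E1"] by linarith
      moreover have "\<bar>h * L\<bar> = h * \<bar>L\<bar>" "\<bar>a * E1\<bar> = a * \<bar>E1\<bar>" "\<bar>h * E2\<bar> = h * \<bar>E2\<bar>"
        using hp a1 by (auto simp: abs_mult)
      ultimately show ?thesis by simp
    qed
    also have "\<dots> \<le> h * (C1 * (u - Rr n)\<^sup>2) + 2 * (B2 * Xm\<^sup>2 * h\<^sup>2) + h * (B1 * Xm * h)"
    proof (intro add_mono mult_left_mono)
      show "a * \<bar>E1\<bar> \<le> 2 * (B2 * Xm\<^sup>2 * h\<^sup>2)"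
        using mult_mono[OF a1(2) E1b _ abs_ge_zero] by simp
    qed (use Lb E2b hp in auto)
    also have "\<dots> = C1 * H n * (u - Rr n)\<^sup>2 + C2 * H n ^ 2"
      unfolding C2_def h_def by (simp add: algebra_simps power2_eq_square)
    finally show ?thesis using D by simp
  qed
qed

lemma variation:
  assumes A: "1 \<le> A" "A + 1 / real M \<le> 2" and u: "u \<in> {1/8..7/8}" and kn: "k \<le> n"
  shows "\<bar>P u (st A \<omega> n) - P u (st A \<omega> k)\<bar> \<le> (\<Sum>i\<in>{k..<n}. C1 * H i * (u - Rr i)\<^sup>2 + C2 * H i ^ 2)"
  using kn
proof (induction n rule: dec_induct)
  case base then show ?case by simp
next
  case (step n)
  have "\<bar>P u (st A \<omega> (Suc n)) - P u (st A \<omega> k)\<bar> \<le>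
        \<bar>P u (st A \<omega> (Suc n)) - P u (st A \<omega> n)\<bar> + \<bar>P u (st A \<omega> n) - P u (st A \<omega> k)\<bar>" by linarith
  also have "\<dots> \<le> (C1 * H n * (u - Rr n)\<^sup>2 + C2 * H n ^ 2) + (\<Sum>i\<in>{k..<n}. C1 * H i * (u - Rr i)\<^sup>2 + C2 * H i ^ 2)"
    using incr[OF A u] step by (intro add_mono) auto
  also have "\<dots> = (\<Sum>i\<in>{k..<Suc n}. C1 * H i * (u - Rr i)\<^sup>2 + C2 * H i ^ 2)"
    using step(1) by simp
  finally show ?case .
qed

end

lemma conv_incr:
  fixes s :: "nat \<Rightarrow> real"
  assumes "\<And>n. \<bar>s (Suc n) - s n\<bar> \<le> c n" "summable c"
  shows "convergent s"
proof -
  have "summable (\<lambda>n. s (Suc n) - s n)"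
    by (rule summable_comparison_test[OF _ assms(2)]) (use assms(1) in auto)
  then have "(\<lambda>n. \<Sum>i<n. s (Suc i) - s i) \<longlonglongrightarrow> (\<Sum>n. s (Suc n) - s n)"
    by (rule summable_LIMSEQ)
  then have "(\<lambda>n. s n - s 0) \<longlonglongrightarrow> (\<Sum>n. s (Suc n) - s n)"
    by (simp add: sum_lessThan_telescope)
  then have "(\<lambda>n. (s n - s 0) + s 0) \<longlonglongrightarrow> (\<Sum>n. s (Suc n) - s n) + s 0"
    by (intro tendsto_add) auto
  then show ?thesis unfolding convergent_def by auto
qed

context kset begin

lemma summable_H: "summable H"
proof -
  have "H = (\<lambda>n. (1 / (2 * real M)) * (1/2) ^ n)" unfolding H_def by (auto simp: fun_eq_iff field_simps)
  then show ?thesis by (auto intro!: summable_mult summable_geometric)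
qed

lemma st_step:
  assumes A: "1 \<le> A" "A + 1 / real M \<le> 2"
  shows "\<exists>X Y. \<bar>X\<bar> \<le> Xm \<and> \<bar>Y\<bar> \<le> Ym \<and>
    st A \<omega> (Suc n) = (if \<omega> n then (fst (st A \<omega> n) + H n, fst (snd (st A \<omega> n)) + H n * X,
                                     snd (snd (st A \<omega> n)) + H n * Y) else st A \<omega> n)"
proof -
  obtain a x1 x2 where p: "st A \<omega> n = (a, x1, x2)" by (metis prod.exhaust)
  have IH: "A \<le> a" "a \<le> A + Sg n" "\<bar>x1\<bar> \<le> Xm * Sg n" using st_inv[OF A, of \<omega> n] p by auto
  define w where "w = Rr n - x1"
  have x1b: "\<bar>x1\<bar> \<le> 1/8" using IH(3) Xm_Sg[of n] by simp
  have w: "w \<in> {0..1}" using Rr_range[of n] x1b unfolding w_def by auto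
  define Q where "Q = f' w / f'' w"
  have a1: "1 \<le> a" using IH A by simp
  have Xb: "\<bar>Q / a\<bar> \<le> Xm"
  proof -
    have "\<bar>Q / a\<bar> = \<bar>Q\<bar> / a" using a1 by (simp add: abs_divide)
    also have "\<dots> \<le> \<bar>Q\<bar> / 1" using a1 by (intro divide_left_mono) auto
    finally show ?thesis using qbounds(1)[OF w] unfolding Q_def by simp
  qed
  have Yb: "\<bar>Q * f' w - f w\<bar> \<le> Ym" using qbounds(2)[OF w] unfolding Q_def .
  have st_eq: "st A \<omega> (Suc n) = (if \<omega> n then (a + H n, x1 + H n * (Q / a), x2 + H n * (Q * f' w - f w)) else (a, x1, x2))"
    using p by (simp add: stepf_def w_def Q_def)
  show ?thesis
    by (rule exI[of _ "Q / a"], rule exI[of _ "Q * f' w - f w"]) (use Xb Yb st_eq p in auto)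
qed

lemma st_incr:
  assumes A: "1 \<le> A" "A + 1 / real M \<le> 2"
  shows "\<bar>fst (st A \<omega> (Suc n)) - fst (st A \<omega> n)\<bar> \<le> 1 * H n"
    "\<bar>fst (snd (st A \<omega> (Suc n))) - fst (snd (st A \<omega> n))\<bar> \<le> Xm * H n"
    "\<bar>snd (snd (st A \<omega> (Suc n))) - snd (snd (st A \<omega> n))\<bar> \<le> Ym * H n"
proof -
  obtain X Y where XY: "\<bar>X\<bar> \<le> Xm" "\<bar>Y\<bar> \<le> Ym"
    "st A \<omega> (Suc n) = (if \<omega> n then (fst (st A \<omega> n) + H n, fst (snd (st A \<omega> n)) + H n * X,
                                     snd (snd (st A \<omega> n)) + H n * Y) else st A \<omega> n)"
    using st_step[OF A] by blast
  have hp: "H n > 0" by (rule H_pos)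
  have Xm0: "Xm \<ge> 0" using XY by linarith
  have Ym0: "Ym \<ge> 0" using XY by linarith
  have "\<bar>H n * X\<bar> \<le> Xm * H n" using XY hp by (simp add: abs_mult mult.commute mult_left_mono)
  moreover have "\<bar>H n * Y\<bar> \<le> Ym * H n" using XY hp by (simp add: abs_mult mult.commute mult_left_mono)
  ultimately show "\<bar>fst (st A \<omega> (Suc n)) - fst (st A \<omega> n)\<bar> \<le> 1 * H n"
    "\<bar>fst (snd (st A \<omega> (Suc n))) - fst (snd (st A \<omega> n))\<bar> \<le> Xm * H n"
    "\<bar>snd (snd (st A \<omega> (Suc n))) - snd (snd (st A \<omega> n))\<bar> \<le> Ym * H n"
    using XY(3) hp Xm0 Ym0 by (auto split: if_splits)
qed

definition ainf where "ainf A \<omega> = lim (\<lambda>n. fst (st A \<omega> n))"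
definition x1inf where "x1inf A \<omega> = lim (\<lambda>n. fst (snd (st A \<omega> n)))"
definition x2inf where "x2inf A \<omega> = lim (\<lambda>n. snd (snd (st A \<omega> n)))"

lemma st_lims:
  assumes A: "1 \<le> A" "A + 1 / real M \<le> 2"
  shows "(\<lambda>n. fst (st A \<omega> n)) \<longlonglongrightarrow> ainf A \<omega>"
    "(\<lambda>n. fst (snd (st A \<omega> n))) \<longlonglongrightarrow> x1inf A \<omega>"
    "(\<lambda>n. snd (snd (st A \<omega> n))) \<longlonglongrightarrow> x2inf A \<omega>"
proof -
  have s1: "summable (\<lambda>n. 1 * H n)" "summable (\<lambda>n. Xm * H n)" "summable (\<lambda>n. Ym * H n)"
    using summable_H by (auto intro: summable_mult)
  show "(\<lambda>n. fst (st A \<omega> n)) \<longlonglongrightarrow> ainf A \<omega>"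
    unfolding ainf_def convergent_LIMSEQ_iff[symmetric] by (rule conv_incr[OF st_incr(1)[OF A] s1(1)])
  show "(\<lambda>n. fst (snd (st A \<omega> n))) \<longlonglongrightarrow> x1inf A \<omega>"
    unfolding x1inf_def convergent_LIMSEQ_iff[symmetric] by (rule conv_incr[OF st_incr(2)[OF A] s1(2)])
  show "(\<lambda>n. snd (snd (st A \<omega> n))) \<longlonglongrightarrow> x2inf A \<omega>"
    unfolding x2inf_def convergent_LIMSEQ_iff[symmetric] by (rule conv_incr[OF st_incr(3)[OF A] s1(3)])
qed

lemma inf_bounds:
  assumes A: "1 \<le> A" "A + 1 / real M \<le> 2"
  shows "A \<le> ainf A \<omega>" "ainf A \<omega> \<le> A + 1 / real M" "\<bar>x1inf A \<omega>\<bar> \<le> 1/8" "\<bar>x2inf A \<omega>\<bar> \<le> Ym"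
proof -
  have i: "\<And>n. A \<le> fst (st A \<omega> n) \<and> fst (st A \<omega> n) \<le> A + 1 / real M \<and>
         \<bar>fst (snd (st A \<omega> n))\<bar> \<le> 1/8 \<and> \<bar>snd (snd (st A \<omega> n))\<bar> \<le> Ym"
  proof -
    fix n
    have Ym0: "Ym \<ge> 0" unfolding Ym_def using Xm_nn B1nn B0nn by simp
    have "Ym * Sg n \<le> Ym * 1"
      using Sg_le[of n] Mpos' Ym0 by (intro mult_left_mono) (auto simp: divide_le_eq order_trans)
    then show "?thesis n" using st_inv[OF A, of \<omega> n] Xm_Sg[of n] Sg_le[of n] by auto
  qed
  show "A \<le> ainf A \<omega>" using i by (intro LIMSEQ_le_const[OF st_lims(1)[OF A]]) auto
  show "ainf A \<omega> \<le> A + 1 / real M" using i by (intro LIMSEQ_le_const2[OF st_lims(1)[OF A]]) auto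
  show "\<bar>x1inf A \<omega>\<bar> \<le> 1/8" using i by (intro LIMSEQ_le_const2[OF tendsto_rabs[OF st_lims(2)[OF A]]]) auto
  show "\<bar>x2inf A \<omega>\<bar> \<le> Ym" using i by (intro LIMSEQ_le_const2[OF tendsto_rabs[OF st_lims(3)[OF A]]]) auto
qed

definition stinf where "stinf A \<omega> = (ainf A \<omega>, x1inf A \<omega>, x2inf A \<omega>)"

lemma P_lim:
  assumes A: "1 \<le> A" "A + 1 / real M \<le> 2" and u: "u \<in> {1/8..7/8}"
  shows "(\<lambda>n. P u (st A \<omega> n)) \<longlonglongrightarrow> P u (stinf A \<omega>)"
proof -
  have x1b: "\<And>n. \<bar>fst (snd (st A \<omega> n))\<bar> \<le> 1/8"
    using st_inv[OF A] Xm_Sg by (meson order_trans)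
  have lim1: "(\<lambda>n. u - fst (snd (st A \<omega> n))) \<longlonglongrightarrow> u - x1inf A \<omega>"
    by (intro tendsto_diff tendsto_const st_lims[OF A])
  have in01: "u - x1inf A \<omega> \<in> {0..1}" using inf_bounds(3)[OF A, of \<omega>] u by (auto simp: abs_le_iff)
  have ev: "\<forall>\<^sub>F n in sequentially. u - fst (snd (st A \<omega> n)) \<in> {0..1}"
  proof (intro always_eventually allI)
    fix n
    have "fst (snd (st A \<omega> n)) \<le> 1/8" "- fst (snd (st A \<omega> n)) \<le> 1/8"
      using abs_le_D1[OF x1b[of n]] abs_le_D2[OF x1b[of n]] by auto
    then show "u - fst (snd (st A \<omega> n)) \<in> {0..1}" using u by auto
  qed
  have "(\<lambda>n. f (u - fst (snd (st A \<omega> n)))) \<longlonglongrightarrow> f (u - x1inf A \<omega>)"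
    using continuous_on_tendsto_compose[OF contf lim1 in01 ev] by (simp add: o_def)
  then show ?thesis unfolding P_def stinf_def
    by (auto intro!: tendsto_add tendsto_mult st_lims[OF A])
qed

lemma var_inf:
  assumes A: "1 \<le> A" "A + 1 / real M \<le> 2" and u: "u \<in> {1/8..7/8}"
    and bd: "\<And>n. n \<ge> k \<Longrightarrow> \<bar>P u (st A \<omega> n) - P u (st A \<omega> k)\<bar> \<le> V"
  shows "\<bar>P u (stinf A \<omega>) - P u (st A \<omega> k)\<bar> \<le> V"
proof (rule LIMSEQ_le_const2)
  show "(\<lambda>n. \<bar>P u (st A \<omega> n) - P u (st A \<omega> k)\<bar>) \<longlonglongrightarrow> \<bar>P u (stinf A \<omega>) - P u (st A \<omega> k)\<bar>"
    by (intro tendsto_rabs tendsto_diff P_lim[OF A u] tendsto_const)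
qed (use bd in auto)

lemma tail_bound:
  assumes kb: "2 ^ b \<le> k" and uk: "\<bar>u - Rr k\<bar> \<le> (3/4) / 2 ^ b"
  shows "(\<Sum>i\<in>{k..<n}. C1 * H i * (u - Rr i)\<^sup>2 + C2 * H i ^ 2)
         \<le> 12 * C1 * H k * ((3/4) / 2 ^ b)\<^sup>2 + 2 * C2 * H k ^ 2"
proof (cases "k \<le> n")
  case False
  then show ?thesis using C1_nn C2_nn H_pos[of k] by simp
next
  case True
  define \<rho> :: real where "\<rho> = (3/4) / 2 ^ b"
  have \<rho>0: "\<rho> \<ge> 0" unfolding \<rho>_def by simp
  have "(\<Sum>i\<in>{k..<n}. C1 * H i * (u - Rr i)\<^sup>2 + C2 * H i ^ 2)
      = (\<Sum>j\<in>{0..<n-k}. C1 * H (k + j) * (u - Rr (k + j))\<^sup>2 + C2 * H (k + j) ^ 2)"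
    using sum.atLeastLessThan_shift_bounds[of "\<lambda>i. C1 * H i * (u - Rr i)\<^sup>2 + C2 * H i ^ 2" 0 k "n - k"] True
    by (simp add: o_def add.commute)
  also have "\<dots> \<le> (\<Sum>j\<in>{0..<n-k}. C1 * H k * \<rho>\<^sup>2 * ((1 + real j)\<^sup>2 / 2 ^ j) + C2 * H k ^ 2 * (1 / 4 ^ j))"
  proof (intro sum_mono add_mono)
    fix j assume "j \<in> {0..<n-k}"
    have "\<bar>u - Rr (k + j)\<bar> \<le> \<bar>u - Rr k\<bar> + \<bar>Rr (k + j) - Rr k\<bar>" by linarith
    also have "\<bar>Rr (k + j) - Rr k\<bar> = 3/4 * \<bar>rr (k + j) - rr k\<bar>"
    proof -
      have e: "Rr (k + j) - Rr k = 3/4 * (rr (k + j) - rr k)" unfolding Rr_def by (simp add: algebra_simps)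
      show ?thesis unfolding e abs_mult by simp
    qed
    also have "\<bar>rr (k + j) - rr k\<bar> \<le> real j / 2 ^ b" using rr_lip[OF kb, of "k + j"] by simp
    finally have "\<bar>u - Rr (k + j)\<bar> \<le> \<rho> * (1 + real j)" using uk unfolding \<rho>_def by (simp add: field_simps)
    then have "\<bar>u - Rr (k + j)\<bar>\<^sup>2 \<le> (\<rho> * (1 + real j))\<^sup>2" by (rule power_mono) simp
    then have "(u - Rr (k + j))\<^sup>2 \<le> (\<rho> * (1 + real j))\<^sup>2"
      by simp
    then have "C1 * H (k + j) * (u - Rr (k + j))\<^sup>2 \<le> C1 * H (k + j) * (\<rho> * (1 + real j))\<^sup>2"
      using C1_nn H_pos[of "k+j"] by (intro mult_left_mono) auto
    also have "\<dots> = C1 * H k * \<rho>\<^sup>2 * ((1 + real j)\<^sup>2 / 2 ^ j)" unfolding H_shift by (simp add: power_mult_distrib)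
    finally show "C1 * H (k + j) * (u - Rr (k + j))\<^sup>2 \<le> C1 * H k * \<rho>\<^sup>2 * ((1 + real j)\<^sup>2 / 2 ^ j)" .
    have four: "(2::real) ^ j * 2 ^ j = 4 ^ j" by (simp add: power_mult_distrib[symmetric])
    show "C2 * H (k + j) ^ 2 \<le> C2 * H k ^ 2 * (1 / 4 ^ j)" unfolding H_shift
      by (simp add: power_divide power2_eq_square four[symmetric])
  qed
  also have "\<dots> = C1 * H k * \<rho>\<^sup>2 * (\<Sum>j<n-k. (1 + real j)\<^sup>2 / 2 ^ j) + C2 * H k ^ 2 * (\<Sum>j<n-k. 1 / 4 ^ j)"
    by (simp add: sum.distrib sum_distrib_left atLeast0LessThan)
  also have "\<dots> \<le> C1 * H k * \<rho>\<^sup>2 * 12 + C2 * H k ^ 2 * 2"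
    using C1_nn C2_nn H_pos[of k] by (intro add_mono mult_left_mono sq_sum_le geo4_sum_le) auto
  finally show ?thesis unfolding \<rho>_def by (simp add: algebra_simps)
qed

end

definition band :: "real set \<Rightarrow> (real \<Rightarrow> real) \<Rightarrow> real \<Rightarrow> (real \<times> real) set" where
  "band I g V = {p. fst p \<in> I \<and> \<bar>snd p - g (fst p)\<bar> \<le> V}"

lemma band_closed:
  assumes "closed I" "continuous_on I g"
  shows "closed (band I g V)"
proof -
  have c: "continuous_on (I \<times> UNIV) (\<lambda>p. \<bar>snd p - g (fst p)\<bar>)"
    by (intro continuous_intros continuous_on_compose2[OF assms(2)]) auto
  have "band I g V = (I \<times> UNIV) \<inter> (\<lambda>p. \<bar>snd p - g (fst p)\<bar>) -` {..V}"
    unfolding band_def by auto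
  then show ?thesis using continuous_closed_preimage[OF c] assms(1) by (simp add: closed_Times)
qed

lemma band_measure:
  assumes I: "I \<in> sets borel" and B: "band I g V \<in> sets borel" and V: "V \<ge> 0"
  shows "emeasure lborel (band I g V) = ennreal (2 * V) * emeasure lborel I"
proof -
  have B': "band I g V \<in> sets (lborel \<Otimes>\<^sub>M lborel)" unfolding lborel_prod using B by simp
  have "emeasure lborel (band I g V) = emeasure (lborel \<Otimes>\<^sub>M (lborel::real measure)) (band I g V)"
    by (simp add: lborel_prod)
  also have "\<dots> = (\<integral>\<^sup>+x. emeasure lborel (Pair x -` band I g V) \<partial>lborel)"
    by (rule lborel.emeasure_pair_measure_alt[OF B'])
  also have "\<dots> = (\<integral>\<^sup>+x. ennreal (2 * V) * indicator I x \<partial>lborel)"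
  proof (intro nn_integral_cong)
    fix x :: real
    show "emeasure lborel (Pair x -` band I g V) = ennreal (2 * V) * indicator I x"
    proof (cases "x \<in> I")
      case True
      then have "Pair x -` band I g V = {g x - V..g x + V}" unfolding band_def by (auto simp: abs_le_iff)
      then show ?thesis using True V by simp
    next
      case False
      then have "Pair x -` band I g V = {}" unfolding band_def by auto
      then show ?thesis using False by simp
    qed
  qed
  also have "\<dots> = ennreal (2 * V) * emeasure lborel I"
    using I by (simp add: nn_integral_cmult_indicator)
  finally show ?thesis .
qed

lemma two_b_le: "2 * b \<le> (2::nat) ^ b"
proof (induction b)
  case 0 then show ?case by simp
next
  case (Suc b)
  show ?case
  proof (cases "b = 0")
    case True then show ?thesis by simp
  next
    case False
    then have "2 \<le> (2::nat) ^ b" using power_increasing[of 1 b "2::nat"] by simp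
    then show ?thesis using Suc by simp
  qed
qed

context kset begin

definition \<rho> :: "nat \<Rightarrow> real" where "\<rho> b = (3/4) / 2 ^ b"
definition Vk :: "nat \<Rightarrow> nat \<Rightarrow> real" where "Vk k b = 12 * C1 * H k * (\<rho> b)\<^sup>2 + 2 * C2 * H k ^ 2"
definition Wk :: "nat \<Rightarrow> nat \<Rightarrow> real set" where "Wk b k = {1/8..7/8} \<inter> {Rr k - \<rho> b..Rr k + \<rho> b}"
definition Aj :: "nat \<Rightarrow> real" where "Aj j = 1 + real j / real M"

definition Cov :: "nat \<Rightarrow> real \<Rightarrow> (real \<times> real) set" where
  "Cov b \<delta> = (\<Union>j<M. \<Union>k\<in>{2^b..<2^Suc b}. \<Union>S\<in>Pow {..<k}.
      band (Wk b k) (\<lambda>u. P u (st (Aj j) (\<lambda>i. i \<in> S) k)) (Vk k b + \<delta>))"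

definition curve :: "real \<Rightarrow> (nat \<Rightarrow> bool) \<Rightarrow> (real \<times> real) set" where
  "curve A \<omega> = {(x1inf A \<omega> + t, x2inf A \<omega> + ainf A \<omega> * f t) | t. t \<in> {1/4..3/4}}"

definition UU :: "(real \<times> real) set" where "UU = (\<Union>j<M. \<Union>\<omega>. curve (Aj j) \<omega>)"

lemma Aj: "j < M \<Longrightarrow> 1 \<le> Aj j \<and> Aj j + 1 / real M \<le> 2"
  unfolding Aj_def using Mpos' by (auto simp: field_simps)

lemma st_prefix: "(\<And>i. i < k \<Longrightarrow> \<omega> i = \<omega>' i) \<Longrightarrow> st A \<omega> k = st A \<omega>' k"
  by (induction k) auto

lemma UU_cover: "UU \<subseteq> Cov b 0"
proof
  fix p assume "p \<in> UU"
  then obtain j \<omega> where j: "j < M" and pc: "p \<in> curve (Aj j) \<omega>"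
    unfolding UU_def by blast
  then obtain t where t: "t \<in> {1/4..3/4}"
    and p: "p = (x1inf (Aj j) \<omega> + t, x2inf (Aj j) \<omega> + ainf (Aj j) \<omega> * f t)"
    unfolding curve_def by blast
  have A: "1 \<le> Aj j" "Aj j + 1 / real M \<le> 2" using Aj[OF j] by auto
  define u where "u = x1inf (Aj j) \<omega> + t"
  have x1b: "x1inf (Aj j) \<omega> \<le> 1/8" "- x1inf (Aj j) \<omega> \<le> 1/8"
    using abs_le_D1[OF inf_bounds(3)[OF A]] abs_le_D2[OF inf_bounds(3)[OF A]] by auto
  have u: "u \<in> {1/8..7/8}" using t x1b unfolding u_def by auto
  define z where "z = (u - 1/8) / (3/4)"
  have z: "0 \<le> z" "z \<le> 1" using u unfolding z_def by auto
  obtain k where kb: "2 ^ b \<le> k" "k < 2 ^ Suc b" and kz: "\<bar>z - rr k\<bar> \<le> 1 / 2 ^ b"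
    using rr_net[OF z] by blast
  have uk: "\<bar>u - Rr k\<bar> \<le> \<rho> b"
  proof -
    have e: "u - Rr k = 3/4 * (z - rr k)" unfolding z_def Rr_def by (simp add: field_simps)
    have "\<bar>u - Rr k\<bar> = 3/4 * \<bar>z - rr k\<bar>" unfolding e abs_mult by simp
    also have "\<dots> \<le> 3/4 * (1 / 2 ^ b)" using kz by simp
    finally show ?thesis unfolding \<rho>_def by simp
  qed
  define S where "S = {i. i < k \<and> \<omega> i}"
  have S: "S \<in> Pow {..<k}" unfolding S_def by auto
  have stk: "st (Aj j) (\<lambda>i. i \<in> S) k = st (Aj j) \<omega> k"
    by (rule st_prefix) (simp add: S_def)
  have "\<bar>P u (stinf (Aj j) \<omega>) - P u (st (Aj j) \<omega> k)\<bar> \<le> Vk k b"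
  proof (rule var_inf[OF A u])
    fix n assume "k \<le> n"
    have "\<bar>P u (st (Aj j) \<omega> n) - P u (st (Aj j) \<omega> k)\<bar> \<le> (\<Sum>i\<in>{k..<n}. C1 * H i * (u - Rr i)\<^sup>2 + C2 * H i ^ 2)"
      by (rule variation[OF A u \<open>k \<le> n\<close>])
    also have "\<dots> \<le> Vk k b" unfolding Vk_def using tail_bound[OF kb(1)] uk unfolding \<rho>_def by simp
    finally show "\<bar>P u (st (Aj j) \<omega> n) - P u (st (Aj j) \<omega> k)\<bar> \<le> Vk k b" .
  qed
  moreover have "P u (stinf (Aj j) \<omega>) = snd p" unfolding P_def stinf_def p u_def by simp
  ultimately have mem: "p \<in> band (Wk b k) (\<lambda>u. P u (st (Aj j) (\<lambda>i. i \<in> S) k)) (Vk k b + 0)"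
  proof -
    assume a1: "\<bar>P u (stinf (Aj j) \<omega>) - P u (st (Aj j) \<omega> k)\<bar> \<le> Vk k b"
      and a2: "P u (stinf (Aj j) \<omega>) = snd p"
    have "fst p = u" unfolding p u_def by simp
    moreover have "u \<in> Wk b k" unfolding Wk_def using u uk by (auto simp: abs_le_iff)
    ultimately show ?thesis unfolding band_def using a1 a2 stk by simp
  qed
  show "p \<in> Cov b 0" unfolding Cov_def
    apply (rule UN_I[of j]) using j apply simp
    apply (rule UN_I[of k]) using kb apply simp
    apply (rule UN_I[of S]) using S apply simp
    using mem .
qed

lemma g_cont:
  assumes j: "j < M"
  shows "continuous_on (Wk b k) (\<lambda>u. P u (st (Aj j) \<omega> k))"
proof -
  have A: "1 \<le> Aj j" "Aj j + 1 / real M \<le> 2" using Aj[OF j] by auto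
  have x1b: "\<bar>fst (snd (st (Aj j) \<omega> k))\<bar> \<le> 1/8"
    using st_inv[OF A, of \<omega> k] Xm_Sg[of k] by auto
  have sub: "(\<lambda>u. u - fst (snd (st (Aj j) \<omega> k))) ` Wk b k \<subseteq> {0..1}"
    using abs_le_D1[OF x1b] abs_le_D2[OF x1b] unfolding Wk_def by auto
  have "continuous_on (Wk b k) (\<lambda>u. f (u - fst (snd (st (Aj j) \<omega> k))))"
    by (rule continuous_on_compose2[OF contf _ sub]) (intro continuous_intros)
  then show ?thesis unfolding P_def by (intro continuous_intros)
qed

lemma Cov_closed: "closed (Cov b \<delta>)"
  unfolding Cov_def
  by (intro closed_UN finite_lessThan finite_atLeastLessThan finite_Pow_iff[THEN iffD2] ballI
        band_closed g_cont) (auto simp: Wk_def)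

lemma vthick_Cov: "\<delta> \<ge> 0 \<Longrightarrow> vthick (Cov b 0) \<delta> \<subseteq> Cov b \<delta>"
proof
  fix q assume d: "\<delta> \<ge> 0" and "q \<in> vthick (Cov b 0) \<delta>"
  then obtain p \<epsilon> where q: "q = p + (0, \<epsilon>)" and p: "p \<in> Cov b 0" and e: "-\<delta> \<le> \<epsilon>" "\<epsilon> \<le> \<delta>"
    unfolding vthick_def by blast
  from p obtain j k S where jkS: "j < M" "k \<in> {2^b..<2^Suc b}" "S \<in> Pow {..<k}"
    and pb: "p \<in> band (Wk b k) (\<lambda>u. P u (st (Aj j) (\<lambda>i. i \<in> S) k)) (Vk k b + 0)"
    unfolding Cov_def by blast
  have "q \<in> band (Wk b k) (\<lambda>u. P u (st (Aj j) (\<lambda>i. i \<in> S) k)) (Vk k b + \<delta>)"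
    using pb q e unfolding band_def by (auto simp: abs_le_iff)
  then show "q \<in> Cov b \<delta>" unfolding Cov_def using jkS by blast
qed

end

context kset begin

definition Cst :: real where "Cst = 11 * C1 + 3 * C2 + 3 * real M"

lemma Vk_nn: "Vk k b \<ge> 0" unfolding Vk_def using C1_nn C2_nn H_pos[of k] by simp

lemma Wk_closed: "closed (Wk b k)" unfolding Wk_def by (intro closed_Int closed_atLeastAtMost)

lemma Wk_measure: "emeasure lborel (Wk b k) \<le> ennreal (2 * \<rho> b)"
proof -
  have "emeasure lborel (Wk b k) \<le> emeasure lborel {Rr k - \<rho> b..Rr k + \<rho> b}"
    by (rule emeasure_mono) (auto simp: Wk_def)
  also have "\<dots> = ennreal (2 * \<rho> b)" by (simp add: \<rho>_def)
  finally show ?thesis .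
qed

lemma band_k_measure:
  assumes j: "j < M" and d: "\<delta> \<ge> 0"
  shows "emeasure lborel (band (Wk b k) (\<lambda>u. P u (st (Aj j) \<omega> k)) (Vk k b + \<delta>))
         \<le> ennreal (4 * \<rho> b * (Vk k b + \<delta>))"
proof -
  have V: "Vk k b + \<delta> \<ge> 0" using Vk_nn d by simp
  have cl: "closed (band (Wk b k) (\<lambda>u. P u (st (Aj j) \<omega> k)) (Vk k b + \<delta>))"
    by (rule band_closed[OF Wk_closed g_cont[OF j]])
  have "emeasure lborel (band (Wk b k) (\<lambda>u. P u (st (Aj j) \<omega> k)) (Vk k b + \<delta>))
      = ennreal (2 * (Vk k b + \<delta>)) * emeasure lborel (Wk b k)"
    by (rule band_measure[OF borel_closed[OF Wk_closed] borel_closed[OF cl] V])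
  also have "\<dots> \<le> ennreal (2 * (Vk k b + \<delta>)) * ennreal (2 * \<rho> b)"
    by (intro mult_left_mono Wk_measure) auto
  also have "\<dots> = ennreal (4 * \<rho> b * (Vk k b + \<delta>))"
    using V by (simp add: ennreal_mult'[symmetric] \<rho>_def algebra_simps)
  finally show ?thesis .
qed

lemma per_k:
  assumes kb: "2 ^ b \<le> k" "k < 2 ^ Suc b" and d: "0 \<le> \<delta>" "\<delta> \<le> (1/2) ^ (2 ^ Suc b + 2 * b)"
  shows "2 ^ k * (4 * \<rho> b * (Vk k b + \<delta>)) \<le> Cst / (real M * 2 ^ b * 4 ^ b)"
proof -
  define hh where "hh = H k"
  define t :: real where "t = 2 ^ b"
  have t0: "t > 0" unfolding t_def by simp
  have q: "(4::real) ^ b = t * t" unfolding t_def by (simp add: power_mult_distrib[symmetric])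
  have R: "\<rho> b = 3 / (4 * t)" unfolding \<rho>_def t_def by simp
  have kh: "2 ^ k * hh = 1 / (2 * real M)" unfolding hh_def H_def by simp
  have hh0: "hh \<ge> 0" unfolding hh_def using H_pos[of k] by simp
  have hk: "hh \<le> 1 / (t * t)"
  proof -
    have "hh \<le> 1 / 2 ^ Suc k" unfolding hh_def H_def using Mpos' by (simp add: divide_left_mono)
    also have "(2::real) ^ (2 * b) \<le> 2 ^ Suc k"
      using two_b_le[of b] kb by (intro power_increasing) auto
    then have "1 / (2::real) ^ Suc k \<le> 1 / 2 ^ (2 * b)" by (intro divide_left_mono) auto
    also have "(2::real) ^ (2 * b) = t * t" unfolding t_def by (simp add: power_mult mult.commute[of 2 b] power2_eq_square power_mult_distrib)
    finally show ?thesis .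
  qed
  have dk: "2 ^ k * \<delta> \<le> 1 / (t * t)"
  proof -
    have "(2::real) ^ k \<le> 2 ^ (2 ^ Suc b)" using kb by (intro power_increasing) auto
    then have "2 ^ k * \<delta> \<le> 2 ^ (2 ^ Suc b) * ((1/2) ^ (2 ^ Suc b + 2 * b))"
      using d by (intro mult_mono) auto
    also have "\<dots> = 1 / 2 ^ (2 * b)" by (simp add: power_add power_one_over)
    also have "(2::real) ^ (2 * b) = t * t" unfolding t_def by (simp add: power_mult mult.commute[of 2 b] power2_eq_square power_mult_distrib)
    finally show ?thesis .
  qed
  have "2 ^ k * (4 * \<rho> b * (Vk k b + \<delta>))
      = 4 * \<rho> b * (12 * C1 * (\<rho> b)\<^sup>2 * (2 ^ k * hh) + 2 * C2 * hh * (2 ^ k * hh)) + 4 * \<rho> b * (2 ^ k * \<delta>)"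
    unfolding Vk_def hh_def by (simp add: algebra_simps power2_eq_square)
  also have "\<dots> = 4 * \<rho> b * (6 * C1 * (\<rho> b)\<^sup>2 / real M + C2 * hh / real M) + 4 * \<rho> b * (2 ^ k * \<delta>)"
    unfolding kh by (simp add: field_simps)
  also have "\<dots> \<le> 4 * \<rho> b * (6 * C1 * (\<rho> b)\<^sup>2 / real M + C2 * (1 / (t * t)) / real M) + 4 * \<rho> b * (1 / (t * t))"
    using hk dk C1_nn C2_nn Mpos' unfolding \<rho>_def
    by (intro add_mono mult_left_mono divide_right_mono) auto
  also have "\<dots> = (3 * (27/8 * C1 + C2) + 3 * real M) / (real M * t * (t * t))"
    unfolding R using t0 Mpos' by (simp add: field_simps power2_eq_square)
  also have "\<dots> \<le> Cst / (real M * t * (t * t))"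
    unfolding Cst_def using C1_nn t0 Mpos' by (intro divide_right_mono) auto
  finally show ?thesis unfolding q t_def by (simp add: mult.assoc)
qed

lemma card_Pow_lessThan: "card (Pow {..<k::nat}) = 2 ^ k" by (simp add: card_Pow)

lemma Cov_measure:
  assumes d: "0 \<le> \<delta>" "\<delta> \<le> (1/2) ^ (2 ^ Suc b + 2 * b)"
  shows "emeasure lborel (Cov b \<delta>) \<le> ennreal (Cst / 4 ^ b)"
proof -
  define E where "E = Cst / (real M * 2 ^ b * 4 ^ b)"
  have E0: "E \<ge> 0" unfolding E_def Cst_def using C1_nn C2_nn by simp
  let ?B = "\<lambda>j k S. band (Wk b k) (\<lambda>u. P u (st (Aj j) (\<lambda>i. i \<in> S) k)) (Vk k b + \<delta>)"
  have Bs: "?B j k S \<in> sets lborel" if "j < M" for j k S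
    using band_closed[OF Wk_closed g_cont[OF that]] by simp
  have lvl3: "emeasure lborel (\<Union>S\<in>Pow {..<k}. ?B j k S) \<le> ennreal E"
    if j: "j < M" and k: "k \<in> {2^b..<2^Suc b}" for j k
  proof -
    have "emeasure lborel (\<Union>S\<in>Pow {..<k}. ?B j k S) \<le> (\<Sum>S\<in>Pow {..<k}. emeasure lborel (?B j k S))"
      by (rule emeasure_subadditive_finite) (use Bs[OF j] in auto)
    also have "\<dots> \<le> (\<Sum>S\<in>Pow {..<k}. ennreal (4 * \<rho> b * (Vk k b + \<delta>)))"
      by (intro sum_mono band_k_measure[OF j d(1)])
    also have "\<dots> = ennreal (\<Sum>S\<in>Pow {..<k}. 4 * \<rho> b * (Vk k b + \<delta>))"
      using Vk_nn[of k b] d by (intro sum_ennreal) (simp add: \<rho>_def)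
    also have "\<dots> = ennreal (2 ^ k * (4 * \<rho> b * (Vk k b + \<delta>)))"
      by (simp add: card_Pow_lessThan)
    also have "\<dots> \<le> ennreal E" unfolding E_def using per_k[OF _ _ d] k by (intro ennreal_leI) auto
    finally show ?thesis .
  qed
  have lvl2: "emeasure lborel (\<Union>k\<in>{2^b..<2^Suc b}. \<Union>S\<in>Pow {..<k}. ?B j k S) \<le> ennreal (2 ^ b * E)"
    if j: "j < M" for j
  proof -
    have "emeasure lborel (\<Union>k\<in>{2^b..<2^Suc b}. \<Union>S\<in>Pow {..<k}. ?B j k S)
        \<le> (\<Sum>k\<in>{2^b..<2^Suc b}. emeasure lborel (\<Union>S\<in>Pow {..<k}. ?B j k S))"
      by (rule emeasure_subadditive_finite) (use Bs[OF j] in auto)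
    also have "\<dots> \<le> (\<Sum>k\<in>{(2::nat)^b..<2^Suc b}. ennreal E)" by (intro sum_mono lvl3[OF j]) auto
    also have "\<dots> = ennreal (\<Sum>k\<in>{(2::nat)^b..<2^Suc b}. E)"
      using E0 by (intro sum_ennreal) auto
    also have "\<dots> = ennreal (2 ^ b * E)" by simp
    finally show ?thesis .
  qed
  have "emeasure lborel (Cov b \<delta>) \<le> (\<Sum>j<M. emeasure lborel (\<Union>k\<in>{2^b..<2^Suc b}. \<Union>S\<in>Pow {..<k}. ?B j k S))"
    unfolding Cov_def by (rule emeasure_subadditive_finite) (use Bs in \<open>auto intro!: sets.finite_UN\<close>)
  also have "\<dots> \<le> (\<Sum>j<M. ennreal (2 ^ b * E))" by (intro sum_mono lvl2) auto
  also have "\<dots> = ennreal (\<Sum>j<M. 2 ^ b * E)"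
    using E0 by (intro sum_ennreal) auto
  also have "\<dots> = ennreal (Cst / 4 ^ b)"
    using Mpos' unfolding E_def by simp
  finally show ?thesis .
qed

end

lemma floor_double:
  fixes z :: real
  shows "\<lfloor>2 * z\<rfloor> = 2 * \<lfloor>z\<rfloor> + (if odd \<lfloor>2 * z\<rfloor> then 1 else 0)"
proof -
  have a: "2 * \<lfloor>z\<rfloor> \<le> \<lfloor>2 * z\<rfloor>"
  proof -
    have "of_int \<lfloor>z\<rfloor> \<le> z" by simp
    then have "of_int (2 * \<lfloor>z\<rfloor>) \<le> 2 * z" by simp
    then show ?thesis by (simp only: le_floor_iff)
  qed
  have b: "\<lfloor>2 * z\<rfloor> \<le> 2 * \<lfloor>z\<rfloor> + 1"
  proof -
    have "z < of_int \<lfloor>z\<rfloor> + 1" by (rule real_of_int_floor_add_one_gt)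
    then have "2 * z < 2 * of_int \<lfloor>z\<rfloor> + 2" by linarith
    then have "2 * z < of_int (2 * \<lfloor>z\<rfloor> + 2)" by simp
    then have "\<lfloor>2 * z\<rfloor> < 2 * \<lfloor>z\<rfloor> + 2" by (simp add: floor_less_iff)
    then show ?thesis by simp
  qed
  show ?thesis
  proof (cases "odd \<lfloor>2 * z\<rfloor>")
    case True
    then have "\<lfloor>2 * z\<rfloor> \<noteq> 2 * \<lfloor>z\<rfloor>" by auto
    then show ?thesis using a b True by simp
  next
    case False
    then have "\<lfloor>2 * z\<rfloor> \<noteq> 2 * \<lfloor>z\<rfloor> + 1" by auto
    then show ?thesis using a b False by simp
  qed
qed

lemma vthick_mono: "A \<subseteq> B \<Longrightarrow> vthick A \<delta> \<subseteq> vthick B \<delta>"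
  unfolding vthick_def by fast

lemma binary_exp:
  fixes y :: real
  assumes "0 \<le> y" "y \<le> 1"
  shows "\<exists>\<omega>. (\<lambda>n. \<Sum>i<n. if \<omega> i then 1 / 2 ^ Suc i else (0::real)) \<longlonglongrightarrow> y"
proof (cases "y = 1")
  case True
  have "(\<lambda>n. \<Sum>i<n. if True then 1 / 2 ^ Suc i else (0::real)) = (\<lambda>n. 1 - (1/2) ^ n)"
  proof
    fix n show "(\<Sum>i<n. if True then 1 / 2 ^ Suc i else (0::real)) = 1 - (1/2) ^ n"
      by (induction n) (auto simp: field_simps)
  qed
  moreover have "(\<lambda>n. 1 - (1/2::real) ^ n) \<longlonglongrightarrow> 1 - 0"
    by (intro tendsto_diff tendsto_const LIMSEQ_realpow_zero) auto
  ultimately show ?thesis using True by (intro exI[of _ "\<lambda>_. True"]) simp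
next
  case False
  with assms have y1: "y < 1" by simp
  define \<omega> where "\<omega> i = odd \<lfloor>y * 2 ^ Suc i\<rfloor>" for i
  have eq: "(\<Sum>i<n. if \<omega> i then 1 / 2 ^ Suc i else (0::real)) = of_int \<lfloor>y * 2 ^ n\<rfloor> / 2 ^ n" for n
  proof (induction n)
    case 0
    have "\<lfloor>y\<rfloor> = 0" using assms y1 by (simp add: floor_eq_iff)
    then show ?case by simp
  next
    case (Suc n)
    have fd: "\<lfloor>y * 2 ^ Suc n\<rfloor> = 2 * \<lfloor>y * 2 ^ n\<rfloor> + (if \<omega> n then 1 else 0)"
    proof -
      have e: "y * 2 ^ Suc n = 2 * (y * 2 ^ n)" by simp
      show ?thesis unfolding \<omega>_def e by (rule floor_double)
    qed
    show ?case using Suc unfolding fd by (auto simp: field_simps)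
  qed
  have lo: "y - (1/2) ^ n \<le> of_int \<lfloor>y * 2 ^ n\<rfloor> / 2 ^ n" for n :: nat
  proof -
    have "y * 2 ^ n - 1 \<le> of_int \<lfloor>y * 2 ^ n\<rfloor>" by linarith
    then have "(y * 2 ^ n - 1) / 2 ^ n \<le> of_int \<lfloor>y * 2 ^ n\<rfloor> / 2 ^ n" by (simp add: divide_right_mono)
    then show ?thesis by (simp add: field_simps power_one_over)
  qed
  have hi: "of_int \<lfloor>y * 2 ^ n\<rfloor> / 2 ^ n \<le> y" for n :: nat
  proof -
    have "of_int \<lfloor>y * 2 ^ n\<rfloor> \<le> y * 2 ^ n" by simp
    then show ?thesis by (simp add: divide_le_eq)
  qed
  have "(\<lambda>n. y - (1/2::real) ^ n) \<longlonglongrightarrow> y - 0"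
    by (intro tendsto_diff tendsto_const LIMSEQ_realpow_zero) auto
  then have l: "(\<lambda>n. y - (1/2::real) ^ n) \<longlonglongrightarrow> y" by simp
  have "(\<lambda>n. of_int \<lfloor>y * 2 ^ n\<rfloor> / 2 ^ n) \<longlonglongrightarrow> y"
    by (rule tendsto_sandwich[OF _ _ l tendsto_const]) (use lo hi in \<open>auto intro!: always_eventually\<close>)
  then show ?thesis unfolding eq[symmetric] by blast
qed

context kset begin

lemma fst_st: "fst (st A \<omega> n) = A + (\<Sum>i<n. if \<omega> i then H i else 0)"
  by (induction n) (auto simp: stepf_def)

lemma ainf_val:
  assumes A: "1 \<le> A" "A + 1 / real M \<le> 2"
    and y: "(\<lambda>n. \<Sum>i<n. if \<omega> i then 1 / 2 ^ Suc i else 0) \<longlonglongrightarrow> y"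
  shows "ainf A \<omega> = A + y / real M"
proof -
  have "(\<lambda>n. A + (\<Sum>i<n. if \<omega> i then 1 / 2 ^ Suc i else 0) / real M) \<longlonglongrightarrow> A + y / real M"
    by (intro tendsto_add tendsto_divide y tendsto_const) (use Mpos' in auto)
  moreover have "(\<lambda>n. A + (\<Sum>i<n. if \<omega> i then 1 / 2 ^ Suc i else 0) / real M) = (\<lambda>n. fst (st A \<omega> n))"
    unfolding fst_st H_def by (auto simp: fun_eq_iff sum_divide_distrib intro!: sum.cong)
  ultimately show ?thesis using st_lims(1)[OF A] LIMSEQ_unique by metis
qed

lemma all_a:
  assumes a: "a \<in> {1..2}"
  shows "\<exists>j \<omega>. j < M \<and> ainf (Aj j) \<omega> = a"
proof (cases "a = 2")
  case True
  obtain \<omega> where \<omega>: "(\<lambda>n. \<Sum>i<n. if \<omega> i then 1 / 2 ^ Suc i else 0) \<longlonglongrightarrow> (1::real)"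
    using binary_exp[of 1] by auto
  have j: "M - 1 < M" using Mpos by simp
  have "ainf (Aj (M - 1)) \<omega> = Aj (M - 1) + 1 / real M"
    by (rule ainf_val[OF _ _ \<omega>]) (use Aj[OF j] in auto)
  also have "\<dots> = 2" unfolding Aj_def using Mpos by (simp add: of_nat_diff field_simps)
  finally show ?thesis using True j by blast
next
  case False
  with a have a2: "1 \<le> a" "a < 2" by auto
  define j where "j = nat \<lfloor>(a - 1) * real M\<rfloor>"
  have fl0: "0 \<le> \<lfloor>(a - 1) * real M\<rfloor>" using a2 by simp
  have jr: "real j = of_int \<lfloor>(a - 1) * real M\<rfloor>" unfolding j_def using fl0 by simp
  have jlt: "j < M"
  proof -
    have "(a - 1) * real M < real M" using a2 Mpos' by simp
    then have "of_int \<lfloor>(a - 1) * real M\<rfloor> < real M" by linarith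
    then show ?thesis using jr by simp
  qed
  define y where "y = (a - 1) * real M - real j"
  have y: "0 \<le> y" "y \<le> 1" unfolding y_def jr by linarith+
  obtain \<omega> where \<omega>: "(\<lambda>n. \<Sum>i<n. if \<omega> i then 1 / 2 ^ Suc i else 0) \<longlonglongrightarrow> y"
    using binary_exp[OF y] by auto
  have "ainf (Aj j) \<omega> = Aj j + y / real M"
    by (rule ainf_val[OF _ _ \<omega>]) (use Aj[OF jlt] in auto)
  also have "\<dots> = a" unfolding Aj_def y_def using Mpos' by (simp add: field_simps)
  finally show ?thesis using jlt by blast
qed

lemma UU_bounded: "bounded UU"
proof -
  define Bd where "Bd = Ym + 2 * B0"
  have "UU \<subseteq> {-1..1} \<times> {-Bd..Bd}"
  proof
    fix p assume "p \<in> UU"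
    then obtain j \<omega> where j: "j < M" and pc: "p \<in> curve (Aj j) \<omega>"
      unfolding UU_def by blast
    then obtain t where t: "t \<in> {1/4..3/4}"
      and p: "p = (x1inf (Aj j) \<omega> + t, x2inf (Aj j) \<omega> + ainf (Aj j) \<omega> * f t)"
      unfolding curve_def by blast
    have A: "1 \<le> Aj j" "Aj j + 1 / real M \<le> 2" using Aj[OF j] by auto
    note ib = inf_bounds[OF A, of \<omega>]
    have "\<bar>ainf (Aj j) \<omega> * f t\<bar> \<le> 2 * B0"
      using ib(1,2) A b0[of t] t by (simp add: abs_mult) (intro mult_mono; auto)
    then show "p \<in> {-1..1} \<times> {-Bd..Bd}"
      using abs_le_D1[OF ib(3)] abs_le_D2[OF ib(3)] abs_le_D1[OF ib(4)] abs_le_D2[OF ib(4)] t p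
      unfolding Bd_def by (auto simp: abs_le_iff)
  qed
  then show ?thesis by (rule bounded_subset[OF bounded_Times[OF bounded_closed_interval bounded_closed_interval]])
qed

lemma Cst_pos: "Cst > 0" unfolding Cst_def using C1_nn C2_nn Mpos' by simp

lemma K_main:
  "\<exists>K. compact K \<and> K \<in> null_sets lebesgue \<and>
     (\<forall>a\<in>{1..2}. \<exists>x1 x2. {(x1 + t, x2 + a * f t) | t. t \<in> {1/4..3/4}} \<subseteq> K) \<and>
     (\<forall>b \<delta>. 0 \<le> \<delta> \<longrightarrow> \<delta> \<le> (1/2) ^ (2 ^ Suc b + 2 * b) \<longrightarrow>
        emeasure lebesgue (vthick K \<delta>) \<le> ennreal (Cst / 4 ^ b))"
proof (intro exI conjI)
  let ?K = "closure UU"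
  show "compact ?K" using UU_bounded by (simp add: compact_closure)
  have KC: "?K \<subseteq> Cov b 0" for b by (rule closure_minimal[OF UU_cover Cov_closed])
  have vb: "emeasure lebesgue (vthick ?K \<delta>) \<le> ennreal (Cst / 4 ^ b)"
    if d: "0 \<le> \<delta>" "\<delta> \<le> (1/2) ^ (2 ^ Suc b + 2 * b)" for b \<delta>
  proof -
    have "vthick ?K \<delta> \<subseteq> vthick (Cov b 0) \<delta>" by (rule vthick_mono[OF KC])
    also have "\<dots> \<subseteq> Cov b \<delta>" by (rule vthick_Cov[OF d(1)])
    finally have sub: "vthick ?K \<delta> \<subseteq> Cov b \<delta>" .
    have Cs: "Cov b \<delta> \<in> sets lborel" using Cov_closed by simp
    have "emeasure lebesgue (vthick ?K \<delta>) \<le> emeasure lebesgue (Cov b \<delta>)"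
      by (rule emeasure_mono[OF sub]) (use Cs in \<open>simp add: sets_completionI_sets\<close>)
    also have "\<dots> = emeasure lborel (Cov b \<delta>)" using Cs by simp
    also have "\<dots> \<le> ennreal (Cst / 4 ^ b)" by (rule Cov_measure[OF d])
    finally show ?thesis .
  qed
  then show "\<forall>b \<delta>. 0 \<le> \<delta> \<longrightarrow> \<delta> \<le> (1/2) ^ (2 ^ Suc b + 2 * b) \<longrightarrow>
        emeasure lebesgue (vthick ?K \<delta>) \<le> ennreal (Cst / 4 ^ b)" by blast
  have Ks: "?K \<in> sets lebesgue"
    using closed_closure[of UU] by (simp add: sets_completionI_sets)
  have le: "emeasure lebesgue ?K \<le> ennreal (Cst / 4 ^ b)" for b
  proof -
    have Cs: "Cov b 0 \<in> sets lborel" using Cov_closed by simp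
    have "emeasure lebesgue ?K \<le> emeasure lebesgue (Cov b 0)"
      by (rule emeasure_mono[OF KC]) (use Cs in \<open>simp add: sets_completionI_sets\<close>)
    also have "\<dots> = emeasure lborel (Cov b 0)" using Cs by simp
    also have "\<dots> \<le> ennreal (Cst / 4 ^ b)" by (rule Cov_measure) auto
    finally show ?thesis .
  qed
  have "(\<lambda>b. ennreal (Cst / 4 ^ b)) \<longlonglongrightarrow> ennreal 0"
  proof (intro tendsto_ennrealI)
    have "(\<lambda>b. Cst * (1/4) ^ b) \<longlonglongrightarrow> Cst * 0"
      by (intro tendsto_mult tendsto_const LIMSEQ_realpow_zero) auto
    moreover have "(\<lambda>b. Cst * (1/4::real) ^ b) = (\<lambda>b. Cst / 4 ^ b)"
      by (simp add: fun_eq_iff power_divide)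
    ultimately show "(\<lambda>b. Cst / 4 ^ b) \<longlonglongrightarrow> 0" by simp
  qed
  then have "emeasure lebesgue ?K \<le> ennreal 0"
    using le by (intro LIMSEQ_le_const[of "\<lambda>b. ennreal (Cst / 4 ^ b)"]) auto
  then show "?K \<in> null_sets lebesgue" using Ks by (simp add: null_sets_def)
  show "\<forall>a\<in>{1..2}. \<exists>x1 x2. {(x1 + t, x2 + a * f t) | t. t \<in> {1/4..3/4}} \<subseteq> ?K"
  proof
    fix a :: real assume a: "a \<in> {1..2}"
    obtain j \<omega> where j: "j < M" and aw: "ainf (Aj j) \<omega> = a" using all_a[OF a] by blast
    have c1: "curve (Aj j) \<omega> \<subseteq> (\<Union>\<omega>. curve (Aj j) \<omega>)" by (rule UN_upper) simp
    have c2: "(\<Union>\<omega>. curve (Aj j) \<omega>) \<subseteq> UU" unfolding UU_def by (rule UN_upper) (use j in simp)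
    have c3: "curve (Aj j) \<omega> = {(x1inf (Aj j) \<omega> + t, x2inf (Aj j) \<omega> + a * f t) | t. t \<in> {1/4..3/4}}"
      unfolding curve_def aw by simp
    have "{(x1inf (Aj j) \<omega> + t, x2inf (Aj j) \<omega> + a * f t) | t. t \<in> {1/4..3/4}} \<subseteq> ?K"
      unfolding c3[symmetric] using c1 c2 closure_subset[of UU] by (rule subset_trans[OF subset_trans])
    then show "\<exists>x1 x2. {(x1 + t, x2 + a * f t) | t. t \<in> {1/4..3/4}} \<subseteq> ?K" by blast
  qed
qed

end

lemma enn_powr_ennreal: "0 \<le> c \<Longrightarrow> enn_powr (ennreal c) r = ennreal (c powr r)"
  unfolding enn_powr_def by simp

lemma enn_powr_mono: "x \<le> y \<Longrightarrow> 0 \<le> r \<Longrightarrow> enn_powr x r \<le> enn_powr y r"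
proof (cases "y = top")
  case True then show ?thesis by (simp add: enn_powr_def)
next
  case False
  assume xy: "x \<le> y" and r: "0 \<le> r"
  then have xt: "x \<noteq> top" using False top.extremum_unique by auto
  have "enn2real x \<le> enn2real y" using xy False by (simp add: enn2real_mono less_top)
  then have "enn2real x powr r \<le> enn2real y powr r" using r by (intro powr_mono2) auto
  then show ?thesis using False xt unfolding enn_powr_def by (simp add: ennreal_leI)
qed

lemma AE_False_space: "(AE x in M. False) \<Longrightarrow> emeasure M (space M) = 0"
  using AE_iff_measurable[OF sets.top, of M "\<lambda>x. False"] by simp

lemma ennreal_finite_ge1:
  assumes "1 \<le> q" "q \<noteq> (top::ennreal)"
  shows "q = ennreal (enn2real q) \<and> 1 \<le> enn2real q"
proof -
  obtain r where r: "q = ennreal r" "0 \<le> r" using assms(2) by (cases q rule: ennreal_cases) auto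
  have "ennreal 1 \<le> ennreal r" using assms(1) r by simp
  then have "1 \<le> r" by (simp only: ennreal_le_iff[OF r(2)])
  then show ?thesis using r by simp
qed

lemma Lp_norm_low:
  assumes sp: "emeasure M (space M) = 1" and c: "0 \<le> c" and h: "\<And>x. x \<in> space M \<Longrightarrow> ennreal c \<le> h x"
    and q: "1 \<le> q"
  shows "ennreal c \<le> Lp_norm M q h"
proof (cases "q = top")
  case True
  have "ennreal c \<le> Inf {d. AE x in M. h x \<le> d}"
  proof (rule Inf_greatest)
    fix d assume "d \<in> {d. AE x in M. h x \<le> d}"
    then have ae: "AE x in M. h x \<le> d" by simp
    show "ennreal c \<le> d"
    proof (rule ccontr)
      assume "\<not> ennreal c \<le> d"
      then have lt: "d < ennreal c" by simp
      have "AE x in M. False"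
        using ae
      proof (rule AE_mp)
        show "AE x in M. h x \<le> d \<longrightarrow> False"
        proof (rule AE_I2)
          fix x assume "x \<in> space M"
          then have "ennreal c \<le> h x" by (rule h)
          then show "h x \<le> d \<longrightarrow> False" using lt by auto
        qed
      qed
      then show False using AE_False_space sp by fastforce
    qed
  qed
  then show ?thesis using True unfolding Lp_norm_def ess_sup_enn_def by simp
next
  case False
  define r where "r = enn2real q"
  have r: "1 \<le> r" using ennreal_finite_ge1[OF q False] unfolding r_def by simp
  have "(\<integral>\<^sup>+x. ennreal (c powr r) \<partial>M) \<le> (\<integral>\<^sup>+x. enn_powr (h x) r \<partial>M)"
  proof (rule nn_integral_mono)
    fix x assume "x \<in> space M"
    then show "ennreal (c powr r) \<le> enn_powr (h x) r"
      using enn_powr_mono[OF h[of x], of r] r c by (simp add: enn_powr_ennreal)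
  qed
  moreover have "(\<integral>\<^sup>+x. ennreal (c powr r) \<partial>M) = ennreal (c powr r)" using sp by simp
  ultimately have "enn_powr (ennreal (c powr r)) (1 / r) \<le> enn_powr (\<integral>\<^sup>+x. enn_powr (h x) r \<partial>M) (1 / r)"
    using r by (intro enn_powr_mono) auto
  moreover have "enn_powr (ennreal (c powr r)) (1 / r) = ennreal c"
    using c r by (simp add: enn_powr_ennreal powr_powr)
  ultimately show ?thesis using False unfolding Lp_norm_def r_def by simp
qed

lemma Lp_norm_indicator_fin:
  assumes E: "E \<in> sets M" and q: "1 \<le> q" "q \<noteq> top"
  shows "Lp_norm M q (indicator E) = enn_powr (emeasure M E) (1 / enn2real q)"
proof -
  define r where "r = enn2real q"
  have r: "1 \<le> r" using ennreal_finite_ge1[OF q] unfolding r_def by simp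
  have "(\<lambda>x. enn_powr (indicator E x) r) = indicator E"
    using r by (auto simp: fun_eq_iff indicator_def enn_powr_def)
  then show ?thesis unfolding Lp_norm_def r_def[symmetric] using q E by simp
qed

lemma Lp_norm_indicator_top:
  assumes E: "E \<in> sets M" "E \<subseteq> space M" and pos: "emeasure M E \<noteq> 0"
  shows "Lp_norm M top (indicator E) = 1"
proof -
  have "Inf {d. AE x in M. (indicator E x :: ennreal) \<le> d} = 1"
  proof (rule antisym)
    show "Inf {d. AE x in M. (indicator E x :: ennreal) \<le> d} \<le> 1"
      by (rule Inf_lower) (auto simp: indicator_def)
    show "1 \<le> Inf {d. AE x in M. (indicator E x :: ennreal) \<le> d}"
    proof (rule Inf_greatest)
      fix d assume "d \<in> {d. AE x in M. (indicator E x :: ennreal) \<le> d}"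
      then have ae: "AE x in M. (indicator E x :: ennreal) \<le> d" by simp
      show "1 \<le> d"
      proof (rule ccontr)
        assume "\<not> 1 \<le> d"
        then have "d < 1" by simp
        have "AE x in M. x \<notin> E"
          using ae
        proof (rule AE_mp)
          show "AE x in M. indicator E x \<le> d \<longrightarrow> x \<notin> E"
          proof (rule AE_I2)
            fix x assume "x \<in> space M"
            show "indicator E x \<le> d \<longrightarrow> x \<notin> E" using \<open>d < 1\<close> by (auto simp: indicator_def)
          qed
        qed
        then have "emeasure M E = 0"
          using AE_iff_measurable[OF E(1), of "\<lambda>x. x \<notin> E"] E(2) by auto
        then show False using pos by simp
      qed
    qed
  qed
  then show ?thesis unfolding Lp_norm_def ess_sup_enn_def by simp
qed

lemma ennreal_unbounded_top:
  assumes "\<And>n::nat. ennreal (real n) \<le> x"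
  shows "x = top"
proof (rule ccontr)
  assume "x \<noteq> top"
  then obtain r where r: "x = ennreal r" "0 \<le> r" by (cases x rule: ennreal_cases) auto
  have "ennreal (real (nat \<lceil>r\<rceil> + 1)) \<le> ennreal r" using assms[of "nat \<lceil>r\<rceil> + 1"] unfolding r(1) .
  then have "real (nat \<lceil>r\<rceil> + 1) \<le> r" by (simp only: ennreal_le_iff[OF r(2)])
  then show False by linarith
qed

lemma nn_lebesgue_on_ge:
  assumes AS: "A \<subseteq> S" and A: "A \<in> sets lebesgue" and S: "S \<in> sets lebesgue" and c: "0 \<le> c"
    and F: "\<And>t. t \<in> A \<Longrightarrow> ennreal c \<le> F t"
  shows "ennreal c * emeasure lebesgue A \<le> (\<integral>\<^sup>+t. F t \<partial>(lebesgue_on S))"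
proof -
  have "ennreal c * emeasure lebesgue A = (\<integral>\<^sup>+t. ennreal c * indicator A t \<partial>lebesgue)"
    using A by (simp add: nn_integral_cmult_indicator)
  also have "\<dots> \<le> (\<integral>\<^sup>+t. F t * indicator S t \<partial>lebesgue)"
    by (intro nn_integral_mono) (use AS F in \<open>auto simp: indicator_def\<close>)
  also have "\<dots> = (\<integral>\<^sup>+t. F t \<partial>(lebesgue_on S))"
    using S by (simp add: nn_integral_restrict_space)
  finally show ?thesis .
qed

lemma leb_Icc: "l \<le> u \<Longrightarrow> emeasure lebesgue {l..u::real} = ennreal (u - l)" by simp

lemma RD_low:
  assumes K: "{(x1 + t, x2 + a * f t) | t. t \<in> {1/4..3/4::real}} \<subseteq> K" and d: "\<delta> > 0"
  shows "ennreal (1/2) \<le> Rop_delta f \<delta> (\<lambda>x. complex_of_real (indicator (vthick K \<delta>) x)) a"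
proof -
  let ?g = "\<lambda>x. complex_of_real (indicator (vthick K \<delta>) x)"
  define inner where "inner t = (\<integral>\<^sup>+s. ennreal (norm (?g (x1 + t, x2 + a * f t + s))) \<partial>(lebesgue_on {-\<delta>..\<delta>}))" for t
  have inn: "ennreal (2 * \<delta>) \<le> inner t" if t: "t \<in> {1/4..3/4}" for t
  proof -
    have "ennreal 1 * emeasure lebesgue {-\<delta>..\<delta>} \<le> inner t"
      unfolding inner_def
    proof (rule nn_lebesgue_on_ge)
      fix s assume s: "s \<in> {-\<delta>..\<delta>}"
      have "(x1 + t, x2 + a * f t) \<in> K" using K t by blast
      moreover have "(x1 + t, x2 + a * f t + s) = (x1 + t, x2 + a * f t) + (0, s)" by simp
      ultimately have "(x1 + t, x2 + a * f t + s) \<in> vthick K \<delta>"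
        unfolding vthick_def mem_Collect_eq
        by (intro exI[of _ "(x1 + t, x2 + a * f t)"] exI[of _ s]) (use s in simp)
      then show "ennreal 1 \<le> ennreal (norm (?g (x1 + t, x2 + a * f t + s)))" by simp
    qed auto
    then show ?thesis using d by simp
  qed
  have "ennreal (2 * \<delta>) * emeasure lebesgue {1/4..3/4::real} \<le> (\<integral>\<^sup>+t. inner t \<partial>(lebesgue_on {0..1}))"
    by (rule nn_lebesgue_on_ge) (use inn d in auto)
  then have o: "ennreal (2 * \<delta>) * ennreal (1/2) \<le> (\<integral>\<^sup>+t. inner t \<partial>(lebesgue_on {0..1}))" by simp
  have m1: "ennreal (2 * \<delta>) * ennreal (1/2) = ennreal (2 * \<delta> * (1/2))"
    by (rule ennreal_mult[symmetric]) (use d in auto)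
  have m2: "ennreal (1 / (2 * \<delta>)) * ennreal (2 * \<delta> * (1/2)) = ennreal (1 / (2 * \<delta>) * (2 * \<delta> * (1/2)))"
    by (rule ennreal_mult[symmetric]) (use d in auto)
  have m3: "1 / (2 * \<delta>) * (2 * \<delta> * (1/2)) = 1/2" using d by simp
  have "ennreal (1/2) = ennreal (1 / (2 * \<delta>)) * (ennreal (2 * \<delta>) * ennreal (1/2))"
    unfolding m1 m2 m3 ..
  also have "\<dots> \<le> ennreal (1 / (2 * \<delta>)) * (\<integral>\<^sup>+t. inner t \<partial>(lebesgue_on {0..1}))"
    by (intro mult_left_mono o) auto
  also have "\<dots> \<le> Rop_delta f \<delta> ?g a"
    unfolding Rop_delta_def inner_def
    by (rule SUP_upper2[of "(x1, x2)"]) auto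
  finally show ?thesis .
qed

lemma Rop_low:
  assumes K: "{(x1 + t, x2 + a * f t) | t. t \<in> {1/4..3/4::real}} \<subseteq> K" and c: "0 \<le> c"
    and g: "\<And>p. p \<in> K \<Longrightarrow> ennreal (2 * c) \<le> ennreal (norm (g p))"
  shows "ennreal c \<le> Rop f g a"
proof -
  have "ennreal (2 * c) * emeasure lebesgue {1/4..3/4::real}
      \<le> (\<integral>\<^sup>+t. ennreal (norm (g (x1 + t, x2 + a * f t))) \<partial>(lebesgue_on {0..1}))"
  proof (rule nn_lebesgue_on_ge)
    fix t :: real assume "t \<in> {1/4..3/4}"
    then have "(x1 + t, x2 + a * f t) \<in> K" using K by blast
    then show "ennreal (2 * c) \<le> ennreal (norm (g (x1 + t, x2 + a * f t)))" by (rule g)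
  qed (use c in auto)
  moreover have "ennreal (2 * c) * emeasure lebesgue {1/4..3/4::real} = ennreal c"
  proof -
    have "ennreal (2 * c) * emeasure lebesgue {1/4..3/4::real} = ennreal (2 * c) * ennreal (3/4 - 1/4)"
      by (subst leb_Icc) auto
    also have "\<dots> = ennreal (2 * c * (3/4 - 1/4))" by (rule ennreal_mult'[symmetric]) (use c in simp)
    also have "\<dots> = ennreal c" by simp
    finally show ?thesis .
  qed
  ultimately have "ennreal c \<le> (\<integral>\<^sup>+t. ennreal (norm (g (x1 + t, x2 + a * f t))) \<partial>(lebesgue_on {0..1}))"
    by simp
  also have "\<dots> \<le> Rop f g a" unfolding Rop_def by (rule SUP_upper2[of "(x1, x2)"]) auto
  finally show ?thesis .
qed

lemma choose_b:
  fixes \<delta> :: real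
  assumes d: "0 < \<delta>" "\<delta> < 1/4"
  shows "\<exists>b. \<delta> \<le> (1/2) ^ (2 ^ Suc b + 2 * b) \<and> ln (1 / \<delta>) \<le> 8 * 2 ^ b"
proof -
  define P where "P b \<longleftrightarrow> \<delta> \<le> (1/2::real) ^ (2 ^ Suc b + 2 * b)" for b
  have P0: "P 0" unfolding P_def using d by (simp add: power2_eq_square)
  obtain N where N: "(1/2::real) ^ N < \<delta>" using real_arch_pow_inv[OF d(1), of "1/2"] by auto
  have bd: "\<forall>y. P y \<longrightarrow> y \<le> N"
  proof (intro allI impI)
    fix y assume "P y"
    then have a: "(1/2::real) ^ N < (1/2) ^ (2 ^ Suc y + 2 * y)" using N unfolding P_def by linarith
    have h: "0 < (1/2::real)" "(1/2::real) < 1" by auto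
    have "2 ^ Suc y + 2 * y < N" using power_strict_decreasing_iff[OF h, of N "2 ^ Suc y + 2 * y"] a by blast
    moreover have "y < 2 ^ Suc y" by (induction y) auto
    ultimately show "y \<le> N" by simp
  qed
  obtain b where b: "P b" "\<forall>y. P y \<longrightarrow> y \<le> b" using Nat.ex_has_greatest_nat[OF P0 bd] by blast
  have "\<not> P (Suc b)" using b(2) by fastforce
  then have lt: "(1/2::real) ^ (2 ^ Suc (Suc b) + 2 * Suc b) < \<delta>" unfolding P_def by simp
  define T where "T = 2 ^ Suc (Suc b) + 2 * Suc b"
  have "1 / \<delta> < 2 ^ T"
  proof -
    have "1 / 2 ^ T < \<delta>" using lt unfolding T_def by (simp add: power_one_over)
    then show ?thesis using d by (simp add: field_simps)
  qed
  then have "ln (1 / \<delta>) < ln (2 ^ T)" using d by (intro ln_less_cancel_iff[THEN iffD2]) auto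
  also have "ln ((2::real) ^ T) = real T * ln 2" by (simp add: ln_realpow)
  also have "\<dots> \<le> real T * 1" using ln_2_less_1 by (intro mult_left_mono) auto
  also have "real T \<le> 8 * 2 ^ b"
  proof -
    have "2 * b \<le> 2 ^ b" by (rule two_b_le)
    moreover have "(1::nat) \<le> 2 ^ b" by simp
    moreover have "T = 4 * 2 ^ b + 2 * b + 2" unfolding T_def by simp
    ultimately have "T \<le> 8 * 2 ^ b" by linarith
    then show ?thesis by (metis of_nat_le_iff of_nat_mult of_nat_numeral of_nat_power)
  qed
  finally show ?thesis using b(1) unfolding P_def by auto
qed

lemma vthick_compact:
  assumes "compact K" "0 \<le> \<delta>"
  shows "compact (vthick K \<delta>)"
proof -
  define T where "T = {0::real} \<times> {-\<delta>..\<delta>}"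
  have eq: "vthick K \<delta> = {x + y | x y. x \<in> K \<and> y \<in> T}"
    unfolding vthick_def T_def by auto
  have cT: "compact T" unfolding T_def by (intro compact_Times) auto
  show ?thesis unfolding eq by (rule compact_sums[OF assms(1) cT])
qed

lemma box_measure: "emeasure lebesgue ({0..1::real} \<times> {0..1::real}) = 1"
proof -
  have "emeasure lborel ({0..1::real} \<times> {0..1::real}) = emeasure (lborel \<Otimes>\<^sub>M lborel) ({0..1::real} \<times> {0..1::real})"
    by (simp add: lborel_prod)
  also have "\<dots> = emeasure lborel {0..1::real} * emeasure lborel {0..1::real}"
    by (rule lborel.emeasure_pair_measure_Times) auto
  also have "\<dots> = 1" by simp
  finally have e: "emeasure lborel ({0..1::real} \<times> {0..1::real}) = 1" .
  have "({0..1::real} \<times> {0..1::real}) \<in> sets lborel"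
    using borel_closed[OF closed_Times[OF closed_atLeastAtMost closed_atLeastAtMost]] by simp
  then have "emeasure lebesgue ({0..1::real} \<times> {0..1::real}) = emeasure lborel ({0..1::real} \<times> {0..1::real})" by simp
  then show ?thesis using e by simp
qed

theorem theorem1p3:
  fixes f f' f'' f''' :: "real \<Rightarrow> real"
  assumes d1: "\<And>x. x \<in> {0..1} \<Longrightarrow> (f has_real_derivative f' x) (at x within {0..1})"
    and d2: "\<And>x. x \<in> {0..1} \<Longrightarrow> (f' has_real_derivative f'' x) (at x within {0..1})"
    and c2: "continuous_on {0..1} f''"
    and d0: "f' 0 \<ge> 0"
    and convex: "(INF x \<in> {0..1}. f'' x) > 0"
    and d3: "\<And>x. x \<in> {0<..<1} \<Longrightarrow> (f'' has_real_derivative f''' x) (at x)"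
    and d3b: "bounded (f''' ` {0<..<1})"
    and key: "\<And>x. x \<in> {0<..<1} \<Longrightarrow> f' x * f''' x - (f'' x)\<^sup>2 \<le> 0"
  shows "(\<exists>K :: (real \<times> real) set. compact K \<and> K \<in> null_sets lebesgue \<and>
            (\<exists>c > 0. \<forall>a \<in> {1..2}. \<exists>x1 x2 \<alpha> \<beta>. 0 \<le> \<alpha> \<and> \<beta> \<le> 1 \<and> \<beta> - \<alpha> \<ge> c \<and>
                 {(x1 + t, x2 + a * f t) | t. t \<in> {\<alpha>..\<beta>}} \<subseteq> K) \<and>
            (\<exists>C :: real. \<exists>\<delta>0 > 0. \<forall>\<delta>. 0 < \<delta> \<and> \<delta> < \<delta>0 \<longrightarrow>
                 emeasure lebesgue (vthick K \<delta>) \<le> ennreal (C * (ln (1 / \<delta>)) powr (-2))))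
       \<and> (\<forall>p q :: ennreal. 1 \<le> p \<longrightarrow> 1 \<le> q \<longrightarrow>
            (\<exists>c > 0. \<exists>\<delta>0 > 0. \<forall>\<delta>. 0 < \<delta> \<and> \<delta> < \<delta>0 \<longrightarrow>
               Rpq_delta f p q \<delta> \<ge>
                 ennreal (c * (ln (1 / \<delta>)) powr (if p = top then 0 else 2 / enn2real p))))
       \<and> (\<forall>p q :: ennreal. 1 \<le> p \<longrightarrow> p < top \<longrightarrow> 1 \<le> q \<longrightarrow> Rpq f p q = top)"
proof -
  have contf: "continuous_on {0..1} f"
    using d1 by (meson DERIV_continuous continuous_on_eq_continuous_within)
  have contf': "continuous_on {0..1} f'"
    using d2 by (meson DERIV_continuous continuous_on_eq_continuous_within)
  obtain B0 where b0: "\<And>x. x \<in> {0..1} \<Longrightarrow> \<bar>f x\<bar> \<le> B0"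
    using compact_imp_bounded[OF compact_continuous_image[OF contf compact_Icc]] unfolding bounded_iff by (auto simp del: atLeastAtMost_iff)
  obtain B1 where b1: "\<And>x. x \<in> {0..1} \<Longrightarrow> \<bar>f' x\<bar> \<le> B1"
    using compact_imp_bounded[OF compact_continuous_image[OF contf' compact_Icc]] unfolding bounded_iff by (auto simp del: atLeastAtMost_iff)
  obtain B2 where b2: "\<And>x. x \<in> {0..1} \<Longrightarrow> \<bar>f'' x\<bar> \<le> B2"
    using compact_imp_bounded[OF compact_continuous_image[OF c2 compact_Icc]] unfolding bounded_iff by (auto simp del: atLeastAtMost_iff)
  obtain B3 where b3: "\<And>x. x \<in> {0<..<1} \<Longrightarrow> \<bar>f''' x\<bar> \<le> B3"
    using d3b unfolding bounded_iff by (auto simp del: greaterThanLessThan_iff)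
  define m where "m = (INF x\<in>{0..1}. f'' x)"
  have bdd: "bdd_below (f'' ` {0..1})"
  proof (rule bdd_belowI2[of _ "-B2"])
    fix x :: real assume "x \<in> {0..1}"
    then show "- B2 \<le> f'' x" using abs_le_D2[OF b2[of x]] by linarith
  qed
  have mle: "\<And>x. x \<in> {0..1} \<Longrightarrow> m \<le> f'' x" unfolding m_def by (rule cINF_lower[OF bdd])
  have mpos: "m > 0" using convex unfolding m_def .
  define M where "M = nat \<lceil>8 * B1 / m\<rceil> + 1"
  have Mpos: "M \<ge> 1" unfolding M_def by simp
  have Mbig: "B1 / m \<le> real M / 8"
  proof -
    have "8 * B1 / m \<le> of_int \<lceil>8 * B1 / m\<rceil>" by simp
    also have "\<dots> \<le> real (nat \<lceil>8 * B1 / m\<rceil>)" by simp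
    also have "\<dots> \<le> real M" unfolding M_def by simp
    finally have "8 * B1 / m \<le> real M" .
    then show ?thesis by (simp add: mult.commute)
  qed
  interpret kset f f' f'' f''' m B0 B1 B2 B3 M
    apply unfold_locales
    subgoal by (rule d1)
    subgoal by (rule d2)
    subgoal by (rule c2)
    subgoal by (rule d3)
    subgoal by (rule mpos)
    subgoal by (rule mle)
    subgoal by (rule b0)
    subgoal by (rule b1)
    subgoal by (rule b2)
    subgoal by (rule b3)
    subgoal by (rule Mpos)
    subgoal by (rule Mbig)
    done
  obtain K where Kc: "compact K" and Kn: "K \<in> null_sets lebesgue"
    and Kcur: "\<forall>a\<in>{1..2}. \<exists>x1 x2. {(x1 + t, x2 + a * f t) | t. t \<in> {1/4..3/4}} \<subseteq> K"
    and Kv: "\<forall>b \<delta>. 0 \<le> \<delta> \<longrightarrow> \<delta> \<le> (1/2) ^ (2 ^ Suc b + 2 * b) \<longrightarrow>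
        emeasure lebesgue (vthick K \<delta>) \<le> ennreal (Cst / 4 ^ b)"
    using K_main by blast
  define C where "C = 64 * Cst"
  have Cpos: "C > 0" unfolding C_def using Cst_pos by simp
  have meas: "emeasure lebesgue (vthick K \<delta>) \<le> ennreal (C * ln (1 / \<delta>) powr (-2))"
    if d: "0 < \<delta>" "\<delta> < 1/4" for \<delta>
  proof -
    obtain b where b: "\<delta> \<le> (1/2) ^ (2 ^ Suc b + 2 * b)" "ln (1 / \<delta>) \<le> 8 * 2 ^ b"
      using choose_b[OF d] by blast
    define L where "L = ln (1 / \<delta>)"
    have L: "L > 0" unfolding L_def using d by simp
    have "emeasure lebesgue (vthick K \<delta>) \<le> ennreal (Cst / 4 ^ b)"
      using spec[OF spec[OF Kv, of b], of \<delta>] b(1) d(1) by simp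
    also have "Cst / 4 ^ b \<le> C * L powr (-2)"
    proof -
      have "L\<^sup>2 \<le> (8 * 2 ^ b)\<^sup>2" using b(2) L unfolding L_def by (intro power_mono) auto
      also have "\<dots> = 64 * 4 ^ b" by (simp add: power2_eq_square power_mult_distrib[symmetric])
      finally have L2: "L\<^sup>2 \<le> 64 * 4 ^ b" .
      have "L powr (-2) = 1 / L\<^sup>2" using L by (simp add: powr_minus_divide)
      then have "C * L powr (-2) = 64 * Cst / L\<^sup>2" unfolding C_def by simp
      moreover have "Cst / 4 ^ b \<le> 64 * Cst / L\<^sup>2"
      proof -
        have "Cst / 4 ^ b = 64 * Cst / (64 * 4 ^ b)" by simp
        also have "\<dots> \<le> 64 * Cst / L\<^sup>2" using L2 L Cst_pos by (intro divide_left_mono) auto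
        finally show ?thesis .
      qed
      ultimately show ?thesis by simp
    qed
    then have "ennreal (Cst / 4 ^ b) \<le> ennreal (C * ln (1 / \<delta>) powr (-2))"
      unfolding L_def by (rule ennreal_leI)
    finally show ?thesis .
  qed
  have part1: "\<exists>K :: (real \<times> real) set. compact K \<and> K \<in> null_sets lebesgue \<and>
            (\<exists>c > 0. \<forall>a \<in> {1..2}. \<exists>x1 x2 \<alpha> \<beta>. 0 \<le> \<alpha> \<and> \<beta> \<le> 1 \<and> \<beta> - \<alpha> \<ge> c \<and>
                 {(x1 + t, x2 + a * f t) | t. t \<in> {\<alpha>..\<beta>}} \<subseteq> K) \<and>
            (\<exists>C :: real. \<exists>\<delta>0 > 0. \<forall>\<delta>. 0 < \<delta> \<and> \<delta> < \<delta>0 \<longrightarrow>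
                 emeasure lebesgue (vthick K \<delta>) \<le> ennreal (C * (ln (1 / \<delta>)) powr (-2)))"
  proof (intro exI conjI)
    show "compact K" by fact
    show "K \<in> null_sets lebesgue" by fact
    show "(1/2::real) > 0" by simp
    show "\<forall>a \<in> {1..2}. \<exists>x1 x2 \<alpha> \<beta>. 0 \<le> \<alpha> \<and> \<beta> \<le> 1 \<and> \<beta> - \<alpha> \<ge> 1/2 \<and>
                 {(x1 + t, x2 + a * f t) | t. t \<in> {\<alpha>..\<beta>}} \<subseteq> K"
    proof
      fix a :: real assume "a \<in> {1..2}"
      then obtain x1 x2 where "{(x1 + t, x2 + a * f t) | t. t \<in> {1/4..3/4}} \<subseteq> K" using Kcur by blast
      then show "\<exists>x1 x2 \<alpha> \<beta>. 0 \<le> \<alpha> \<and> \<beta> \<le> 1 \<and> \<beta> - \<alpha> \<ge> 1/2 \<and>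
                 {(x1 + t, x2 + a * f t) | t. t \<in> {\<alpha>..\<beta>}} \<subseteq> K"
        by (intro exI[of _ x1] exI[of _ x2] exI[of _ "1/4"] exI[of _ "3/4"]) auto
    qed
    show "(1/4::real) > 0" by simp
    show "\<forall>\<delta>. 0 < \<delta> \<and> \<delta> < 1/4 \<longrightarrow> emeasure lebesgue (vthick K \<delta>) \<le> ennreal (C * (ln (1 / \<delta>)) powr (-2))"
      using meas by auto
  qed
  have LL: "ln (1 / \<delta>) > 0" if "0 < \<delta>" "\<delta> < 1/4" for \<delta> :: real
    using that by simp
  have Eborel: "vthick K \<delta> \<in> sets borel" if "0 \<le> \<delta>" for \<delta>
    using borel_closed[OF compact_imp_closed[OF vthick_compact[OF Kc that]]] .
  have Eleb: "vthick K \<delta> \<in> sets lebesgue" if "0 \<le> \<delta>" for \<delta>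
    using Eborel[OF that] by (simp add: sets_completionI_sets)
  have one12: "(1::real) \<in> {1..2}" by simp
  from bspec[OF Kcur one12] obtain y1 y2 where cur1: "{(y1 + t, y2 + 1 * f t) | t. t \<in> {1/4..3/4}} \<subseteq> K"
    by blast
  have Epos: "emeasure lebesgue (vthick K \<delta>) \<noteq> 0" if d: "0 < \<delta>" for \<delta>
  proof -
    define I where "I = {y1 + 1/4..y1 + 3/4}"
    define g where "g u = y2 + 1 * f (u - y1)" for u
    have sub: "(\<lambda>u. u - y1) ` I \<subseteq> {0..1}" unfolding I_def by auto
    have gc: "continuous_on I g" unfolding g_def
      by (intro continuous_intros continuous_on_compose2[OF contf _ sub])
    have bc: "closed (band I g \<delta>)" by (rule band_closed[OF _ gc]) (simp add: I_def)
    have bsub: "band I g \<delta> \<subseteq> vthick K \<delta>"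
    proof
      fix p assume "p \<in> band I g \<delta>"
      then have u: "fst p \<in> I" and y: "\<bar>snd p - g (fst p)\<bar> \<le> \<delta>" unfolding band_def by auto
      define t where "t = fst p - y1"
      have t: "t \<in> {1/4..3/4}" using u unfolding I_def t_def by auto
      have inK: "(y1 + t, y2 + 1 * f t) \<in> K" using cur1 t by blast
      have "p = (y1 + t, y2 + 1 * f t) + (0, snd p - g (fst p))"
        unfolding t_def g_def by (cases p) simp
      then show "p \<in> vthick K \<delta>" unfolding vthick_def mem_Collect_eq
        by (intro exI[of _ "(y1 + t, y2 + 1 * f t)"] exI[of _ "snd p - g (fst p)"])
           (use inK y in \<open>auto simp: abs_le_iff\<close>)
    qed
    have "emeasure lborel (band I g \<delta>) = ennreal (2 * \<delta>) * emeasure lborel I"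
      by (rule band_measure) (use bc d in \<open>auto simp: I_def\<close>)
    also have "\<dots> = ennreal (2 * \<delta>) * ennreal (1/2)" unfolding I_def by simp
    also have "\<dots> = ennreal (2 * \<delta> * (1/2))" by (rule ennreal_mult[symmetric]) (use d in auto)
    finally have bm: "emeasure lborel (band I g \<delta>) = ennreal \<delta>" by simp
    have bs: "band I g \<delta> \<in> sets lborel" using bc by simp
    have "emeasure lebesgue (band I g \<delta>) \<le> emeasure lebesgue (vthick K \<delta>)"
      by (rule emeasure_mono[OF bsub Eleb]) (use d in simp)
    moreover have "emeasure lebesgue (band I g \<delta>) = ennreal \<delta>" using bs bm by simp
    ultimately show ?thesis using d by (auto simp: ennreal_eq_0_iff)
  qed
  have spc: "emeasure (lebesgue_on {1..2::real}) (space (lebesgue_on {1..2::real})) = 1"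
    by (simp add: emeasure_restrict_space space_restrict_space)
  define gE where "gE \<delta> = (\<lambda>x. complex_of_real (indicator (vthick K \<delta>) x))" for \<delta>
  have ng: "(\<lambda>x. ennreal (norm (gE \<delta> x))) = indicator (vthick K \<delta>)" for \<delta>
    unfolding gE_def by (auto simp: fun_eq_iff indicator_def)
  have gmeas: "gE \<delta> \<in> borel_measurable borel" if "0 \<le> \<delta>" for \<delta>
  proof -
    have [measurable]: "vthick K \<delta> \<in> sets borel" using Eborel[OF that] .
    show ?thesis unfolding gE_def by measurable
  qed
  have RDl: "ennreal (1/2) \<le> Lp_norm (lebesgue_on {1..2}) q (Rop_delta f \<delta> (gE \<delta>))"
    if q: "1 \<le> q" and d: "0 < \<delta>" for q \<delta>
  proof (rule Lp_norm_low[OF spc _ _ q])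
    fix a assume "a \<in> space (lebesgue_on {1..2::real})"
    then have "a \<in> {1..2}" by simp
    then obtain x1 x2 where "{(x1 + t, x2 + a * f t) | t. t \<in> {1/4..3/4}} \<subseteq> K" using Kcur by blast
    then show "ennreal (1/2) \<le> Rop_delta f \<delta> (gE \<delta>) a" unfolding gE_def by (rule RD_low[OF _ d])
  qed simp
  have part2: "\<forall>p q :: ennreal. 1 \<le> p \<longrightarrow> 1 \<le> q \<longrightarrow>
            (\<exists>c > 0. \<exists>\<delta>0 > 0. \<forall>\<delta>. 0 < \<delta> \<and> \<delta> < \<delta>0 \<longrightarrow>
               Rpq_delta f p q \<delta> \<ge>
                 ennreal (c * (ln (1 / \<delta>)) powr (if p = top then 0 else 2 / enn2real p)))"
  proof (intro allI impI)
    fix p q :: ennreal assume p: "1 \<le> p" and q: "1 \<le> q"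
    show "\<exists>c > 0. \<exists>\<delta>0 > 0. \<forall>\<delta>. 0 < \<delta> \<and> \<delta> < \<delta>0 \<longrightarrow>
               Rpq_delta f p q \<delta> \<ge>
                 ennreal (c * (ln (1 / \<delta>)) powr (if p = top then 0 else 2 / enn2real p))"
    proof (cases "p = top")
      case True
      have H: "\<forall>\<delta>. 0 < \<delta> \<and> \<delta> < 1/4 \<longrightarrow>
               Rpq_delta f p q \<delta> \<ge> ennreal (1/2 * (ln (1 / \<delta>)) powr (if p = top then 0 else 2 / enn2real p))"
      proof (intro allI impI)
        fix \<delta> :: real assume d: "0 < \<delta> \<and> \<delta> < 1/4"
        have N: "Lp_norm lebesgue p (\<lambda>x. ennreal (norm (gE \<delta> x))) = 1"
          unfolding ng True by (rule Lp_norm_indicator_top[OF Eleb]) (use d Epos in auto)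
        have gin: "gE \<delta> \<in> Lp_test p" unfolding Lp_test_def using N gmeas d by auto
        have "ennreal (1/2) \<le> Lp_norm (lebesgue_on {1..2}) q (Rop_delta f \<delta> (gE \<delta>))"
          using RDl[OF q] d by auto
        also have "\<dots> = Lp_norm (lebesgue_on {1..2}) q (Rop_delta f \<delta> (gE \<delta>)) /
                        Lp_norm lebesgue p (\<lambda>x. ennreal (norm (gE \<delta> x)))" unfolding N by (simp add: divide_ennreal_def)
        also have "\<dots> \<le> Rpq_delta f p q \<delta>" unfolding Rpq_delta_def by (rule SUP_upper[OF gin])
        finally show "Rpq_delta f p q \<delta> \<ge> ennreal (1/2 * (ln (1 / \<delta>)) powr (if p = top then 0 else 2 / enn2real p))"
          using True LL[of \<delta>] d by simp
      qed
      show ?thesis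
        apply (rule exI[of _ "1/2"])
        apply (rule conjI, simp)
        apply (rule exI[of _ "1/4"])
        using H by simp
    next
      case False
      define pr where "pr = enn2real p"
      have pr: "1 \<le> pr" using ennreal_finite_ge1[OF p False] unfolding pr_def by simp
      define c where "c = (1/2) / C powr (1 / pr)"
      have c: "c > 0" unfolding c_def using Cpos by simp
      have H: "\<forall>\<delta>. 0 < \<delta> \<and> \<delta> < 1/4 \<longrightarrow>
               Rpq_delta f p q \<delta> \<ge> ennreal (c * (ln (1 / \<delta>)) powr (if p = top then 0 else 2 / enn2real p))"
      proof (intro allI impI)
        fix \<delta> :: real assume d: "0 < \<delta> \<and> \<delta> < 1/4"
        define L where "L = ln (1 / \<delta>)"
        have L: "L > 0" unfolding L_def using LL d by auto
        define \<mu> where "\<mu> = emeasure lebesgue (vthick K \<delta>)"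
        have \<mu>le: "\<mu> \<le> ennreal (C * L powr (-2))" unfolding \<mu>_def L_def using meas d by auto
        have \<mu>0: "\<mu> \<noteq> 0" unfolding \<mu>_def using Epos d by auto
        have \<mu>t: "\<mu> \<noteq> top" using \<mu>le by (auto simp: top_unique)
        define \<mu>r where "\<mu>r = enn2real \<mu>"
        have \<mu>lt: "\<mu> < top" using \<mu>t by (simp add: less_top)
        have \<mu>e: "\<mu> = ennreal \<mu>r" unfolding \<mu>r_def using ennreal_enn2real[OF \<mu>lt] by simp
        have \<mu>r0: "\<mu>r > 0" using \<mu>0 \<mu>e \<mu>r_def enn2real_nonneg by (metis ennreal_0 less_eq_real_def)
        have \<mu>rle: "\<mu>r \<le> C * L powr (-2)"
          using \<mu>le unfolding \<mu>e using Cpos L by (simp add: ennreal_le_iff)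
        define X where "X = \<mu>r powr (1 / pr)"
        have X0: "X > 0" unfolding X_def using \<mu>r0 by simp
        have E0: "vthick K \<delta> \<in> sets lebesgue" using Eleb d by auto
        have "Lp_norm lebesgue p (indicator (vthick K \<delta>)) = enn_powr \<mu> (1 / pr)"
          using Lp_norm_indicator_fin[OF E0 p False] unfolding \<mu>_def pr_def .
        also have "\<dots> = ennreal X" unfolding \<mu>e X_def using \<mu>r0 by (simp add: enn_powr_ennreal)
        finally have N: "Lp_norm lebesgue p (\<lambda>x. ennreal (norm (gE \<delta> x))) = ennreal X"
          unfolding ng .
        have gin: "gE \<delta> \<in> Lp_test p" unfolding Lp_test_def using N gmeas d X0 by auto
        have "ennreal (1/2) / ennreal X \<le> Lp_norm (lebesgue_on {1..2}) q (Rop_delta f \<delta> (gE \<delta>)) / ennreal X"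
          using RDl[OF q] d by (intro divide_right_mono_ennreal) auto
        also have "\<dots> \<le> Rpq_delta f p q \<delta>" unfolding Rpq_delta_def N[symmetric] by (rule SUP_upper[OF gin])
        finally have R0: "ennreal (1/2) / ennreal X \<le> Rpq_delta f p q \<delta>" .
        have dv: "ennreal ((1/2) / X) = ennreal (1/2) / ennreal X"
          by (rule divide_ennreal[symmetric]) (use X0 in auto)
        have R: "ennreal ((1/2) / X) \<le> Rpq_delta f p q \<delta>" unfolding dv by (rule R0)
        have XY: "X \<le> C powr (1 / pr) / L powr (2 / pr)"
        proof -
          have "X \<le> (C * L powr (-2)) powr (1 / pr)" unfolding X_def
            using \<mu>rle \<mu>r0 pr by (intro powr_mono2) auto
          also have "\<dots> = C powr (1 / pr) * (L powr (-2)) powr (1 / pr)"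
            using Cpos L by (simp add: powr_mult)
          also have "(L powr (-2)) powr (1 / pr) = L powr (- (2 / pr))" by (simp add: powr_powr)
          also have "\<dots> = 1 / L powr (2 / pr)" by (simp add: powr_minus_divide)
          finally show ?thesis by simp
        qed
        have "c * L powr (2 / pr) = (1/2) / (C powr (1 / pr) / L powr (2 / pr))"
          unfolding c_def using L Cpos by simp
        also have "\<dots> \<le> (1/2) / X"
        proof -
          have Ypos: "0 < C powr (1 / pr) / L powr (2 / pr)" using Cpos L by simp
          have pp: "0 < (C powr (1 / pr) / L powr (2 / pr)) * X" using Ypos X0 by (rule mult_pos_pos)
          have h2: "0 \<le> (1/2::real)" by simp
          show ?thesis by (rule divide_left_mono[OF XY h2 pp])
        qed
        finally have "ennreal (c * L powr (2 / pr)) \<le> ennreal ((1/2) / X)" by (rule ennreal_leI)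
        then show "Rpq_delta f p q \<delta> \<ge> ennreal (c * (ln (1 / \<delta>)) powr (if p = top then 0 else 2 / enn2real p))"
          using R False unfolding L_def pr_def by simp
      qed
      show ?thesis
        apply (rule exI[of _ c])
        apply (rule conjI[OF c])
        apply (rule exI[of _ "1/4"])
        using H by simp
    qed
  qed
  define B where "B = {0..1::real} \<times> {0..1::real}"
  have Bb: "B \<in> sets borel" unfolding B_def
    using borel_closed[OF closed_Times[OF closed_atLeastAtMost closed_atLeastAtMost]] .
  have Bl: "B \<in> sets lebesgue" using Bb by (simp add: sets_completionI_sets)
  have Kb: "K \<in> sets borel" using borel_closed[OF compact_imp_closed[OF Kc]] .
  have part3: "\<forall>p q :: ennreal. 1 \<le> p \<longrightarrow> p < top \<longrightarrow> 1 \<le> q \<longrightarrow> Rpq f p q = top"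
  proof (intro allI impI)
    fix p q :: ennreal assume p: "1 \<le> p" and pt: "p < top" and q: "1 \<le> q"
    have pnt: "p \<noteq> top" using pt by simp
    show "Rpq f p q = top"
    proof (rule ennreal_unbounded_top)
      fix n :: nat
      define G where "G x = complex_of_real (indicator B x + 2 * real n * indicator K x)" for x
      have nG: "ennreal (norm (G x)) = ennreal (indicator B x + 2 * real n * indicator K x)" for x
      proof -
        have "0 \<le> indicator B x + 2 * real n * indicator K x" by (simp add: indicator_def)
        then show ?thesis unfolding G_def norm_of_real by simp
      qed
      have Gm: "G \<in> borel_measurable borel"
      proof -
        have [measurable]: "B \<in> sets borel" "K \<in> sets borel" using Bb Kb .
        show ?thesis unfolding G_def by measurable
      qed
      have ae: "AE x in lebesgue. ennreal (norm (G x)) = indicator B x"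
        using AE_not_in[OF Kn] by (rule AE_mp) (auto simp: nG indicator_def intro!: AE_I2)
      have N: "Lp_norm lebesgue p (\<lambda>x. ennreal (norm (G x))) = 1"
      proof -
        have "Lp_norm lebesgue p (\<lambda>x. ennreal (norm (G x))) = Lp_norm lebesgue p (indicator B)"
        proof -
          have I: "(\<integral>\<^sup>+x. enn_powr (ennreal (norm (G x))) (enn2real p) \<partial>lebesgue)
                 = (\<integral>\<^sup>+x. enn_powr (indicator B x) (enn2real p) \<partial>lebesgue)"
            by (rule nn_integral_cong_AE) (rule eventually_mono[OF ae], simp)
          show ?thesis unfolding Lp_norm_def using pnt I by simp
        qed
        also have "\<dots> = enn_powr (emeasure lebesgue B) (1 / enn2real p)"
          by (rule Lp_norm_indicator_fin[OF Bl p pnt])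
        also have "\<dots> = 1" unfolding B_def box_measure
          by (simp add: enn_powr_def)
        finally show ?thesis .
      qed
      have gin: "G \<in> Lp_test p" unfolding Lp_test_def using N Gm by auto
      have RL: "ennreal (real n) \<le> Lp_norm (lebesgue_on {1..2}) q (Rop f G)"
      proof (rule Lp_norm_low[OF spc _ _ q])
        fix a assume "a \<in> space (lebesgue_on {1..2::real})"
        then have "a \<in> {1..2}" by simp
        then obtain x1 x2 where cu: "{(x1 + t, x2 + a * f t) | t. t \<in> {1/4..3/4}} \<subseteq> K" using Kcur by blast
        show "ennreal (real n) \<le> Rop f G a"
        proof (rule Rop_low[OF cu])
          fix pt assume "pt \<in> K"
          then show "ennreal (2 * real n) \<le> ennreal (norm (G pt))"
            unfolding nG by (intro ennreal_leI) (auto simp: indicator_def)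
        qed simp
      qed simp
      have "ennreal (real n) \<le> Lp_norm (lebesgue_on {1..2}) q (Rop f G) / Lp_norm lebesgue p (\<lambda>x. ennreal (norm (G x)))"
        using RL unfolding N by (simp add: divide_ennreal_def)
      also have "\<dots> \<le> Rpq f p q" unfolding Rpq_def by (rule SUP_upper[OF gin])
      finally show "ennreal (real n) \<le> Rpq f p q" .
    qed
  qed
  show ?thesis using part1 part2 part3 by blast
qed

end
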